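(* Let $\mathcal{B}=\langle V,F,E\rangle$ be any finite bipartite graph and $W\subseteq V$. Then Algorithm 3 (causal ordering via coarse decomposition) applied to $(W,\mathcal{B})$ is well-defined and its output directed cluster graph is unique, i.e. it does not depend on the choice of the maximum matching nor on the choices made in computing the causal ordering graph of the complete part.
   Context: A bipartite graph $\mathcal{B}=\langle V,F,E\rangle$ has disjoint vertex sets $V,F$ and undirected edges $(v-f)$, $v\in V$, $f\in F$; $\mathrm{adj}_{\mathcal{B}}(X)$ is the set of vertices adjacent to some vertex of $X$. $F'\subseteq F$ is self-contained if $|F'|=|\mathrm{adj}_{\mathcal{B}}(F')|$ and $|F''|\le|\mathrm{adj}_{\mathcal{B}}(F'')|$ for all $F''\subseteq F'$; $\mathcal{B}$ is self-contained if $|F|=|V|$ and $F$ is self-contained; a non-empty self-contained set is minimal self-contained if no non-empty strict subset is self-contained. A matching is a set of edges without common endpoints; a maximum matching is one of maximal cardinality. For a matching $M$, an alternating path is a sequence of distinct vertices (possibly a single vertex) in which consecutive vertices are adjacent and the edges used alternate between edges not in $M$ and edges in $M$. A directed cluster graph is a pair $\langle\mathcal{V},\mathcal{E}\rangle$ with $\mathcal{V}$ a partition of a vertex set and $\mathcal{E}$ a set of edges $x\to C$ from vertices to clusters; $\mathrm{cl}_{\mathcal{V}}(x)$ is the cluster containing $x$. Algorithm 1 (input $W$ and $\mathcal{B}$ with the subgraph induced by $(V\setminus W)\cup F$ self-contained): initialize $\mathcal{E}=\emptyset$, $\mathcal{V}=\{\{w\}:w\in W\}$, $\mathcal{B}'=\langle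 V',F',E'\rangle$ the subgraph induced by $(V\setminus W)\cup F$; while $\mathcal{B}'$ is non-null: choose a minimal self-contained $S_F\subseteq F'$ in $\mathcal{B}'$, let $C=S_F\cup\mathrm{adj}_{\mathcal{B}'}(S_F)$, add $C$ to $\mathcal{V}$, add $v\to C$ for every $v\in\mathrm{adj}_{\mathcal{B}}(S_F)\setminus\mathrm{adj}_{\mathcal{B}'}(S_F)$, and replace $\mathcal{B}'$ by its subgraph induced by $(V'\cup F')\setminus C$. Output $\langle\mathcal{V},\mathcal{E}\rangle$. Coarse decomposition of a bipartite graph $\mathcal{B}'$ w.r.t. a maximum matching $M$: let $V_{\mathrm{un}},F_{\mathrm{un}}$ be the vertices of the variable side and of the constraint side left unmatched by $M$; $T_I$ is the set of vertices joined by an alternating path to some vertex of $V_{\mathrm{un}}$, $T_O$ the set of vertices joined by an alternating path to some vertex of $F_{\mathrm{un}}$, and $T_C$ the remaining vertices. Algorithm 3 (input $W\subseteq V$, $\mathcal{B}$): let $\mathcal{B}'$ be the subgraph of $\mathcal{B}$ induced by $(V\setminus W)\cup F$; choose a maximum matching $M$ of $\mathcal{B}'$; let $\langle T_I,T_C,T_O\rangle$ be the coarse decomposition of $\mathcal{B}'$ w.r.t. $M$ and $\mathcal{B}_I,\mathcal{B}_C,\mathcal{B}_O$ the subgraphs of $\mathcal{B}'$ induced by $T_I,T_C,T_O$. Let $\langle\mathcal{V}_C,\mathcal{E}_C\rangle$ be the output of Algorithm 1 on $\mathcal{B}_C$ with no exogenous vertices; $\mathcal{V}_I$, $\mathcal{V}_O$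 the partitions of $T_I$, $T_O$ into vertex sets of connected components of $\mathcal{B}_I$, $\mathcal{B}_O$. Set $\mathcal{V}=\mathcal{V}_I\cup\mathcal{V}_C\cup\mathcal{V}_O\cup\{\{w\}:w\in W\}$ and $\mathcal{E}=\mathcal{E}_C$; for each $(v-f)\in E$: if $v\in(T_O\cup T_C)\cap V$ and $f\in T_I\cap F$, add $v\to\mathrm{cl}_{\mathcal{V}}(f)$; else if $v\in T_O\cap V$ and $f\in T_C\cap F$, add $v\to\mathrm{cl}_{\mathcal{V}}(f)$. For each $w\in W$ add $w\to\mathrm{cl}_{\mathcal{V}}(f)$ for all $f\in\mathrm{adj}_{\mathcal{B}}(w)$. Output $\langle\mathcal{V},\mathcal{E}\rangle$. *)

theory Defs
  imports Main "HOL-Library.Disjoint_Sets"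
begin

text \<open>A bipartite graph is given by two disjoint vertex sets V (variables) and F
  (constraints) of a common type and an edge set E of pairs (v,f) with v in V, f in F.\<close>

definition bipartite :: "'a set \<Rightarrow> 'a set \<Rightarrow> ('a \<times> 'a) set \<Rightarrow> bool" where
  "bipartite V F E \<longleftrightarrow> V \<inter> F = {} \<and> E \<subseteq> V \<times> F"

definition adj :: "('a \<times> 'a) set \<Rightarrow> 'a set \<Rightarrow> 'a set" where
  "adj E X = {y. \<exists>x\<in>X. (x, y) \<in> E \<or> (y, x) \<in> E}"

definition self_contained_set :: "('a \<times> 'a) set \<Rightarrow> 'a set \<Rightarrow> bool" where
  "self_contained_set E Fs \<longleftrightarrow>
     card Fs = card (adj E Fs) \<and> (\<forall>G\<subseteq>Fs. card G \<le> card (adj E G))"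

definition self_contained_graph :: "'a set \<Rightarrow> 'a set \<Rightarrow> ('a \<times> 'a) set \<Rightarrow> bool" where
  "self_contained_graph V F E \<longleftrightarrow> card F = card V \<and> self_contained_set E F"

definition min_self_contained :: "'a set \<Rightarrow> ('a \<times> 'a) set \<Rightarrow> 'a set \<Rightarrow> bool" where
  "min_self_contained F E S \<longleftrightarrow> S \<noteq> {} \<and> S \<subseteq> F \<and> self_contained_set E S \<and>
     (\<forall>S'. S' \<subset> S \<and> S' \<noteq> {} \<longrightarrow> \<not> self_contained_set E S')"

section \<open>Algorithm 1 (nondeterministic), as a transition system\<close>

text \<open>State: (remaining vertex set R of B' (B' is the subgraph of B induced by R),
  clusters so far, cluster edges so far). Cluster edges x \<rightarrow> C are pairs (x, C).\<close>

type_synonym 'a alg1_state = "'a set \<times> 'a set set \<times> ('a \<times> 'a set) set"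

definition alg1_init :: "'a set \<Rightarrow> 'a set \<Rightarrow> 'a set \<Rightarrow> 'a alg1_state" where
  "alg1_init V F W = ((V - W) \<union> F, (\<lambda>w. {w}) ` W, {})"

inductive alg1_step :: "'a set \<Rightarrow> ('a \<times> 'a) set \<Rightarrow> 'a alg1_state \<Rightarrow> 'a alg1_state \<Rightarrow> bool"
  for F E where
  "\<lbrakk> R \<noteq> {};
     min_self_contained (F \<inter> R) (E \<inter> (R \<times> R)) S;
     C = S \<union> adj (E \<inter> (R \<times> R)) S \<rbrakk> \<Longrightarrow>
   alg1_step F E (R, Vc, Ec)
     (R - C, insert C Vc, Ec \<union> {(v, C) | v. v \<in> adj E S - adj (E \<inter> (R \<times> R)) S})"

definition alg1_reachable ::
  "'a set \<Rightarrow> 'a set \<Rightarrow> ('a \<times> 'a) set \<Rightarrow> 'a set \<Rightarrow> 'a alg1_state \<Rightarrow> bool" where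
  "alg1_reachable V F E W st \<longleftrightarrow> (alg1_step F E)\<^sup>*\<^sup>* (alg1_init V F W) st"

definition alg1_output ::
  "'a set \<Rightarrow> 'a set \<Rightarrow> ('a \<times> 'a) set \<Rightarrow> 'a set \<Rightarrow> 'a set set \<times> ('a \<times> 'a set) set \<Rightarrow> bool" where
  "alg1_output V F E W out \<longleftrightarrow> (\<exists>Vc Ec. alg1_reachable V F E W ({}, Vc, Ec) \<and> out = (Vc, Ec))"

text \<open>Algorithm 1 is well-defined on (W, B): its input condition holds and in every reachable
  state with B' non-null a minimal self-contained set can be chosen (termination is automatic,
  since each step removes a non-empty set of vertices from a finite set).\<close>
definition alg1_well_defined :: "'a set \<Rightarrow> 'a set \<Rightarrow> ('a \<times> 'a) set \<Rightarrow> 'a set \<Rightarrow> bool" where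
  "alg1_well_defined V F E W \<longleftrightarrow>
     self_contained_graph (V - W) F (E \<inter> (((V - W) \<union> F) \<times> ((V - W) \<union> F))) \<and>
     (\<forall>R Vc Ec. alg1_reachable V F E W (R, Vc, Ec) \<and> R \<noteq> {} \<longrightarrow>
        (\<exists>st'. alg1_step F E (R, Vc, Ec) st'))"

definition matching :: "('a \<times> 'a) set \<Rightarrow> bool" where
  "matching M \<longleftrightarrow> (\<forall>e1\<in>M. \<forall>e2\<in>M. e1 \<noteq> e2 \<longrightarrow>
     {fst e1, snd e1} \<inter> {fst e2, snd e2} = {})"

definition max_matching :: "('a \<times> 'a) set \<Rightarrow> ('a \<times> 'a) set \<Rightarrow> bool" where
  "max_matching E M \<longleftrightarrow> M \<subseteq> E \<and> matching M \<and>
     (\<forall>M'. M' \<subseteq> E \<and> matching M' \<longrightarrow> card M' \<le> card M)"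

definition alternating_path :: "('a \<times> 'a) set \<Rightarrow> ('a \<times> 'a) set \<Rightarrow> 'a list \<Rightarrow> bool" where
  "alternating_path E M p \<longleftrightarrow> p \<noteq> [] \<and> distinct p \<and>
     (\<forall>i. Suc i < length p \<longrightarrow>
        ((p ! i, p ! Suc i) \<in> E \<or> (p ! Suc i, p ! i) \<in> E) \<and>
        (((p ! i, p ! Suc i) \<in> M \<or> (p ! Suc i, p ! i) \<in> M) \<longleftrightarrow> odd i))"

definition unmatched :: "'a set \<Rightarrow> ('a \<times> 'a) set \<Rightarrow> 'a set" where
  "unmatched S M = {x\<in>S. \<forall>y. (x, y) \<notin> M \<and> (y, x) \<notin> M}"

definition alt_reach :: "('a \<times> 'a) set \<Rightarrow> ('a \<times> 'a) set \<Rightarrow> 'a set \<Rightarrow> 'a set" where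
  "alt_reach E M U = {x. \<exists>p. alternating_path E M p \<and> hd p \<in> U \<and> last p = x}"

definition coarse_I :: "'a set \<Rightarrow> ('a \<times> 'a) set \<Rightarrow> ('a \<times> 'a) set \<Rightarrow> 'a set" where
  "coarse_I Vb Eb M = alt_reach Eb M (unmatched Vb M)"

definition coarse_O :: "'a set \<Rightarrow> ('a \<times> 'a) set \<Rightarrow> ('a \<times> 'a) set \<Rightarrow> 'a set" where
  "coarse_O Fb Eb M = alt_reach Eb M (unmatched Fb M)"

definition coarse_C :: "'a set \<Rightarrow> 'a set \<Rightarrow> ('a \<times> 'a) set \<Rightarrow> ('a \<times> 'a) set \<Rightarrow> 'a set" where
  "coarse_C Vb Fb Eb M = (Vb \<union> Fb) - coarse_I Vb Eb M - coarse_O Fb Eb M"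

definition components :: "'a set \<Rightarrow> ('a \<times> 'a) set \<Rightarrow> 'a set set" where
  "components S E = {{y\<in>S. (x, y) \<in> ((E \<union> E\<inverse>) \<inter> (S \<times> S))\<^sup>*} | x. x \<in> S}"

definition cl :: "'a set set \<Rightarrow> 'a \<Rightarrow> 'a set" where
  "cl Vs x = (THE C. C \<in> Vs \<and> x \<in> C)"

text \<open>B' has vertex sets V - W and F and edge set alg3_E' V F E W.\<close>
definition alg3_E' :: "'a set \<Rightarrow> 'a set \<Rightarrow> ('a \<times> 'a) set \<Rightarrow> 'a set \<Rightarrow> ('a \<times> 'a) set" where
  "alg3_E' V F E W = E \<inter> (((V - W) \<union> F) \<times> ((V - W) \<union> F))"

definition alg3_TI where "alg3_TI V F E W M = coarse_I (V - W) (alg3_E' V F E W) M"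
definition alg3_TO where "alg3_TO V F E W M = coarse_O F (alg3_E' V F E W) M"
definition alg3_TC where "alg3_TC V F E W M = coarse_C (V - W) F (alg3_E' V F E W) M"

definition alg3_output_for ::
  "'a set \<Rightarrow> 'a set \<Rightarrow> ('a \<times> 'a) set \<Rightarrow> 'a set \<Rightarrow> ('a \<times> 'a) set \<Rightarrow>
   'a set set \<times> ('a \<times> 'a set) set \<Rightarrow> bool" where
  "alg3_output_for V F E W M out \<longleftrightarrow>
    (let TI = alg3_TI V F E W M; TO = alg3_TO V F E W M; TC = alg3_TC V F E W M in
     \<exists>VC EC. alg1_output (V \<inter> TC) (F \<inter> TC) (E \<inter> (TC \<times> TC)) {} (VC, EC) \<and>
       (let Vs = components TI (E \<inter> (TI \<times> TI)) \<union> VC \<union> components TO (E \<inter> (TO \<times> TO))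
                 \<union> (\<lambda>w. {w}) ` W
        in out = (Vs,
             EC
             \<union> {(v, cl Vs f) | v f. (v, f) \<in> E \<and> v \<in> (TO \<union> TC) \<inter> V \<and> f \<in> TI \<inter> F}
             \<union> {(v, cl Vs f) | v f. (v, f) \<in> E \<and> \<not> (v \<in> (TO \<union> TC) \<inter> V \<and> f \<in> TI \<inter> F)
                                   \<and> v \<in> TO \<inter> V \<and> f \<in> TC \<inter> F}
             \<union> {(w, cl Vs f) | w f. w \<in> W \<and> f \<in> adj E {w}})))"

definition alg3_output ::
  "'a set \<Rightarrow> 'a set \<Rightarrow> ('a \<times> 'a) set \<Rightarrow> 'a set \<Rightarrow> 'a set set \<times> ('a \<times> 'a set) set \<Rightarrow> bool" where
  "alg3_output V F E W out \<longleftrightarrow>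
     (\<exists>M. max_matching (alg3_E' V F E W) M \<and> alg3_output_for V F E W M out)"

text \<open>Well-definedness of Algorithm 3: a maximum matching exists; for every maximum matching,
  Algorithm 1 is well-defined on the complete part B_C (with no exogenous vertices); and the
  resulting cluster set partitions V \<union> F, so that cl is well-defined.\<close>
definition alg3_well_defined :: "'a set \<Rightarrow> 'a set \<Rightarrow> ('a \<times> 'a) set \<Rightarrow> 'a set \<Rightarrow> bool" where
  "alg3_well_defined V F E W \<longleftrightarrow>
     (\<exists>M. max_matching (alg3_E' V F E W) M) \<and>
     (\<forall>M. max_matching (alg3_E' V F E W) M \<longrightarrow>
        (let TC = alg3_TC V F E W M in
          alg1_well_defined (V \<inter> TC) (F \<inter> TC) (E \<inter> (TC \<times> TC)) {}) \<and>
        (\<forall>out. alg3_output_for V F E W M out \<longrightarrow> partition_on (V \<union> F) (fst out)))"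

end

theory Submission
  imports Defs
begin


definition nb :: "('a \<times> 'a) set \<Rightarrow> 'a \<Rightarrow> 'a \<Rightarrow> bool" where
  "nb E x y \<longleftrightarrow> (x, y) \<in> E \<or> (y, x) \<in> E"

lemma alt_path_conv: "alternating_path (E\<inverse>) (M\<inverse>) p = alternating_path E M p"
  unfolding alternating_path_def by auto

lemma unmatched_conv: "unmatched S (M\<inverse>) = unmatched S M"
  by (auto simp: unmatched_def)

lemma alt_reach_conv: "alt_reach (E\<inverse>) (M\<inverse>) U = alt_reach E M U"
  by (simp add: alt_reach_def alt_path_conv)

lemma matching_alt: "matching M \<longleftrightarrow> (\<forall>a b c d. (a,b)\<in>M \<longrightarrow> (c,d)\<in>M \<longrightarrow> (a,b)\<noteq>(c,d) \<longrightarrow> {a,b}\<inter>{c,d}={})"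
  unfolding matching_def Ball_def by (simp only: split_paired_All fst_conv snd_conv) meson

lemma matching_conv1: "matching M \<Longrightarrow> matching (M\<inverse>)"
  unfolding matching_alt
proof (intro allI impI)
  fix a b c d assume H: "\<forall>a b c d. (a,b)\<in>M \<longrightarrow> (c,d)\<in>M \<longrightarrow> (a,b)\<noteq>(c,d) \<longrightarrow> {a,b}\<inter>{c,d}={}"
    and h: "(a,b) \<in> M\<inverse>" "(c,d) \<in> M\<inverse>" "(a,b) \<noteq> (c,d)"
  have "(b,a) \<in> M" "(d,c) \<in> M" "(b,a) \<noteq> (d,c)" using h by auto
  then have "{b,a}\<inter>{d,c}={}" using H by blast
  moreover have "{a,b} = {b,a}" "{c,d}={d,c}" by auto
  ultimately show "{a,b}\<inter>{c,d}={}" by simp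
qed

lemma matching_conv: "matching (M\<inverse>) = matching M"
  using matching_conv1[of M] matching_conv1[of "M\<inverse>"] by auto

lemma max_matching_conv: "max_matching (E\<inverse>) (M\<inverse>) = max_matching E M"
proof -
  have "(\<forall>M'. M' \<subseteq> E\<inverse> \<and> matching M' \<longrightarrow> card M' \<le> card (M\<inverse>)) \<longleftrightarrow>
        (\<forall>M'. M' \<subseteq> E \<and> matching M' \<longrightarrow> card M' \<le> card M)"
  proof
    assume H: "\<forall>M'. M' \<subseteq> E\<inverse> \<and> matching M' \<longrightarrow> card M' \<le> card (M\<inverse>)"
    show "\<forall>M'. M' \<subseteq> E \<and> matching M' \<longrightarrow> card M' \<le> card M"
    proof (intro allI impI)
      fix M' assume "M' \<subseteq> E \<and> matching M'"
      then have "M'\<inverse> \<subseteq> E\<inverse> \<and> matching (M'\<inverse>)" by (auto simp: matching_conv)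
      then show "card M' \<le> card M" using H card_inverse by metis
    qed
  next
    assume H: "\<forall>M'. M' \<subseteq> E \<and> matching M' \<longrightarrow> card M' \<le> card M"
    show "\<forall>M'. M' \<subseteq> E\<inverse> \<and> matching M' \<longrightarrow> card M' \<le> card (M\<inverse>)"
    proof (intro allI impI)
      fix M' assume "M' \<subseteq> E\<inverse> \<and> matching M'"
      then have "M'\<inverse> \<subseteq> E \<and> matching (M'\<inverse>)" by (auto simp: matching_conv)
      then show "card M' \<le> card (M\<inverse>)" using H card_inverse by metis
    qed
  qed
  then show ?thesis unfolding max_matching_def by (auto simp: matching_conv)
qed

lemma alt_path_edge:
  assumes "alternating_path E M p" "Suc i < length p"
  shows "nb E (p!i) (p!Suc i)" "nb M (p!i) (p!Suc i) \<longleftrightarrow> odd i"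
  using assms unfolding alternating_path_def nb_def by auto

lemma alt_path_single: "alternating_path E M [x]"
  unfolding alternating_path_def by auto

lemma alt_path_take:
  assumes "alternating_path E M p" "0 < k"
  shows "alternating_path E M (take k p)"
  using assms unfolding alternating_path_def by (auto simp: distinct_take)

lemma alt_path_snoc:
  assumes "alternating_path E M p" "x \<notin> set p" "nb E (last p) x"
    "nb M (last p) x \<longleftrightarrow> odd (length p - 1)"
  shows "alternating_path E M (p @ [x])"
  unfolding alternating_path_def
proof (intro conjI allI impI)
  have p: "p \<noteq> []" "distinct p" using assms(1) alternating_path_def by auto
  show "p @ [x] \<noteq> []" by simp
  show "distinct (p @ [x])" using p assms(2) by simp
  fix i assume i: "Suc i < length (p @ [x])"
  show "((p @ [x]) ! i, (p @ [x]) ! Suc i) \<in> E \<or> ((p @ [x]) ! Suc i, (p @ [x]) ! i) \<in> E"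
   and "(((p @ [x]) ! i, (p @ [x]) ! Suc i) \<in> M \<or> ((p @ [x]) ! Suc i, (p @ [x]) ! i) \<in> M) = odd i"
  proof -
    have "(((p @ [x]) ! i, (p @ [x]) ! Suc i) \<in> E \<or> ((p @ [x]) ! Suc i, (p @ [x]) ! i) \<in> E) \<and>
       ((((p @ [x]) ! i, (p @ [x]) ! Suc i) \<in> M \<or> ((p @ [x]) ! Suc i, (p @ [x]) ! i) \<in> M) = odd i)"
    proof (cases "Suc i < length p")
      case True
      then show ?thesis using assms(1) by (simp add: nth_append alternating_path_def)
    next
      case False
      then have "Suc i = length p" using i by simp
      then have ii: "i = length p - 1" by simp
      then have "(p @ [x]) ! i = last p" "(p @ [x]) ! Suc i = x" "i = length p - 1"
        using p \<open>Suc i = length p\<close> by (auto simp: nth_append last_conv_nth)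
      then show ?thesis using assms(3,4) by (simp add: nb_def)
    qed
    then show "((p @ [x]) ! i, (p @ [x]) ! Suc i) \<in> E \<or> ((p @ [x]) ! Suc i, (p @ [x]) ! i) \<in> E"
     and "(((p @ [x]) ! i, (p @ [x]) ! Suc i) \<in> M \<or> ((p @ [x]) ! Suc i, (p @ [x]) ! i) \<in> M) = odd i"
      by auto
  qed
qed

lemma path_side:
  assumes "alternating_path E M p" "hd p \<in> A" "k < length p"
    and EAB: "\<And>x y. (x, y) \<in> E \<Longrightarrow> (x \<in> A \<and> y \<in> B) \<or> (x \<in> B \<and> y \<in> A)"
    and disj: "A \<inter> B = {}"
  shows "(even k \<longrightarrow> p!k \<in> A) \<and> (odd k \<longrightarrow> p!k \<in> B)"
  using assms(3)
proof (induction k)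
  case 0
  then show ?case using assms(1,2) by (simp add: alternating_path_def hd_conv_nth)
next
  case (Suc k)
  then have IH: "(even k \<longrightarrow> p!k \<in> A) \<and> (odd k \<longrightarrow> p!k \<in> B)" by simp
  have "nb E (p!k) (p!Suc k)" using alt_path_edge[OF assms(1) Suc.prems] by simp
  then show ?case using IH EAB disj unfolding nb_def by auto
qed

definition pm :: "('a \<times> 'a) set \<Rightarrow> 'a \<Rightarrow> 'a" where "pm M a = (SOME b. (a, b) \<in> M)"

lemma matching_AB:
  assumes "M \<subseteq> A \<times> B" "A \<inter> B = {}"
    and "\<And>x y. x \<in> M \<Longrightarrow> y \<in> M \<Longrightarrow> fst x = fst y \<Longrightarrow> x = y"
    and "\<And>x y. x \<in> M \<Longrightarrow> y \<in> M \<Longrightarrow> snd x = snd y \<Longrightarrow> x = y"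
  shows "matching M"
  unfolding matching_alt
proof (intro allI impI)
  fix a b c d assume h: "(a, b) \<in> M" "(c, d) \<in> M" "(a, b) \<noteq> (c, d)"
  then have "a \<noteq> c" "b \<noteq> d" using assms(3)[OF h(1,2)] assms(4)[OF h(1,2)] by auto
  moreover have "a \<in> A" "b \<in> B" "c \<in> A" "d \<in> B" using h assms(1) by auto
  ultimately show "{a, b} \<inter> {c, d} = {}" using assms(2) by auto
qed

locale bm =
  fixes A B :: "'a set" and E M :: "('a \<times> 'a) set"
  assumes fA: "finite A" and fB: "finite B" and disj: "A \<inter> B = {}" and EAB: "E \<subseteq> A \<times> B"
    and ME: "M \<subseteq> E" and mat: "matching M"
begin

lemma EAB': "(x, y) \<in> E \<Longrightarrow> (x \<in> A \<and> y \<in> B) \<or> (x \<in> B \<and> y \<in> A)" using EAB by auto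
lemma EAB'': "(x, y) \<in> E \<Longrightarrow> (x \<in> B \<and> y \<in> A) \<or> (x \<in> A \<and> y \<in> B)" using EAB by auto
lemma disj': "B \<inter> A = {}" using disj by auto

lemma M_fst: "(a, b) \<in> M \<Longrightarrow> (a, b') \<in> M \<Longrightarrow> b = b'"
proof (rule ccontr)
  assume h: "(a, b) \<in> M" "(a, b') \<in> M" "b \<noteq> b'"
  then have "{a, b} \<inter> {a, b'} = {}" using mat[unfolded matching_alt, rule_format, of a b a b'] by simp
  then show False by blast
qed

lemma M_snd: "(a, b) \<in> M \<Longrightarrow> (a', b) \<in> M \<Longrightarrow> a = a'"
proof (rule ccontr)
  assume h: "(a, b) \<in> M" "(a', b) \<in> M" "a \<noteq> a'"
  then have "{a, b} \<inter> {a', b} = {}" using mat[unfolded matching_alt, rule_format, of a b a' b] by simp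
  then show False by blast
qed

end
context bm begin
lemma finE: "finite E" using EAB fA fB finite_subset by blast
lemma finM: "finite M" using ME finE finite_subset by blast

lemma sideA: "alternating_path E M p \<Longrightarrow> hd p \<in> A \<Longrightarrow> k < length p \<Longrightarrow>
   (even k \<longrightarrow> p!k \<in> A) \<and> (odd k \<longrightarrow> p!k \<in> B)"
  using path_side[OF _ _ _ EAB' disj] by blast

lemma sideB: "alternating_path E M p \<Longrightarrow> hd p \<in> B \<Longrightarrow> k < length p \<Longrightarrow>
   (even k \<longrightarrow> p!k \<in> B) \<and> (odd k \<longrightarrow> p!k \<in> A)"
  using path_side[OF _ _ _ EAB'' disj'] by blast

lemma path_ne: "alternating_path E M p \<Longrightarrow> p \<noteq> []" by (simp add: alternating_path_def)
lemma path_dist: "alternating_path E M p \<Longrightarrow> distinct p" by (simp add: alternating_path_def)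

lemma orientE: "nb E x y \<Longrightarrow> x \<in> A \<Longrightarrow> (x, y) \<in> E \<and> y \<in> B"
  using EAB disj unfolding nb_def by auto
lemma orientE2: "nb E x y \<Longrightarrow> x \<in> B \<Longrightarrow> (y, x) \<in> E \<and> y \<in> A"
  using EAB disj unfolding nb_def by auto
lemma orientM: "nb M x y \<Longrightarrow> x \<in> A \<Longrightarrow> (x, y) \<in> M"
  using EAB ME disj unfolding nb_def by auto
lemma orientM2: "nb M x y \<Longrightarrow> x \<in> B \<Longrightarrow> (y, x) \<in> M"
  using EAB ME disj unfolding nb_def by auto

lemma reach_nth:
  assumes "alternating_path E M p" "hd p \<in> U" "j < length p"
  shows "p ! j \<in> alt_reach E M U"
proof -
  have "alternating_path E M (take (Suc j) p)" using alt_path_take[OF assms(1)] by simp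
  moreover have "hd (take (Suc j) p) = hd p" by (simp add: hd_take)
  moreover have "last (take (Suc j) p) = p ! j" using assms(3) by (simp add: take_Suc_conv_app_nth)
  ultimately show ?thesis using assms(2) unfolding alt_reach_def mem_Collect_eq
    by (intro exI[of _ "take (Suc j) p"]) simp
qed

lemma reach_snoc:
  assumes "alternating_path E M p" "hd p \<in> U" "x \<notin> set p" "nb E (last p) x"
    "nb M (last p) x \<longleftrightarrow> odd (length p - 1)"
  shows "x \<in> alt_reach E M U"
proof -
  have "alternating_path E M (p @ [x])" using alt_path_snoc[OF assms(1,3,4,5)] .
  moreover have "hd (p @ [x]) = hd p" using path_ne[OF assms(1)] by simp
  ultimately show ?thesis using assms(2) unfolding alt_reach_def mem_Collect_eq
    by (intro exI[of _ "p @ [x]"]) simp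
qed

lemma last_nth: "alternating_path E M p \<Longrightarrow> last p = p ! (length p - 1)"
  using path_ne last_conv_nth by blast

abbreviation "TI \<equiv> alt_reach E M (unmatched A M)"
abbreviation "TIB \<equiv> alt_reach E M (unmatched B M)"

lemma unm_sub: "unmatched S M \<subseteq> S" by (auto simp: unmatched_def)

lemma unm_reach: "unmatched S M \<subseteq> alt_reach E M (unmatched S M)"
proof
  fix u assume "u \<in> unmatched S M"
  moreover have "alternating_path E M [u]" by (rule alt_path_single)
  ultimately show "u \<in> alt_reach E M (unmatched S M)" unfolding alt_reach_def mem_Collect_eq
    by (intro exI[of _ "[u]"]) simp
qed

lemma TI_sub: "TI \<subseteq> A \<union> B"
proof
  fix x assume "x \<in> TI"
  then obtain p where p: "alternating_path E M p" "hd p \<in> unmatched A M" "last p = x"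
    unfolding alt_reach_def by blast
  have "hd p \<in> A" using p(2) unm_sub by blast
  have "length p - 1 < length p" using path_ne[OF p(1)] by simp
  then have s: "(even (length p - 1) \<longrightarrow> p!(length p - 1) \<in> A) \<and> (odd (length p - 1) \<longrightarrow> p!(length p - 1) \<in> B)"
    using sideA[OF p(1) \<open>hd p \<in> A\<close>] by blast
  have "x = p!(length p - 1)" using p(3) last_nth[OF p(1)] by simp
  then show "x \<in> A \<union> B" using s by (cases "even (length p - 1)") auto
qed

lemma TIB_sub: "TIB \<subseteq> A \<union> B"
proof
  fix x assume "x \<in> TIB"
  then obtain p where p: "alternating_path E M p" "hd p \<in> unmatched B M" "last p = x"
    unfolding alt_reach_def by blast
  have "hd p \<in> B" using p(2) unm_sub by blast
  have "length p - 1 < length p" using path_ne[OF p(1)] by simp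
  then have s: "(even (length p - 1) \<longrightarrow> p!(length p - 1) \<in> B) \<and> (odd (length p - 1) \<longrightarrow> p!(length p - 1) \<in> A)"
    using sideB[OF p(1) \<open>hd p \<in> B\<close>] by blast
  have "x = p!(length p - 1)" using p(3) last_nth[OF p(1)] by simp
  then show "x \<in> A \<union> B" using s by (cases "even (length p - 1)") auto
qed

end
context bm begin
lemma closeA:
  assumes "a \<in> TI" "a \<in> A" "(a, b) \<in> E"
  shows "b \<in> TI"
proof -
  obtain p where p: "alternating_path E M p" "hd p \<in> unmatched A M" "last p = a"
    using assms(1) unfolding alt_reach_def by blast
  define n where "n = length p"
  have n0: "0 < n" using path_ne[OF p(1)] n_def by simp
  have hA: "hd p \<in> A" using p(2) unm_sub by blast
  have la: "p ! (n - 1) = a" using last_nth[OF p(1)] p(3) n_def by simp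
  have ev: "even (n - 1)"
  proof (rule ccontr)
    assume "\<not> even (n - 1)"
    then have "p ! (n-1) \<in> B" using sideA[OF p(1) hA, of "n-1"] n0 n_def by simp
    then show False using la assms(2) disj by auto
  qed
  show ?thesis
  proof (cases "b \<in> set p")
    case True
    then obtain j where "j < length p" "p ! j = b" by (auto simp: in_set_conv_nth)
    then show ?thesis using reach_nth[OF p(1,2)] by metis
  next
    case False
    have notM: "\<not> nb M a b"
    proof
      assume "nb M a b"
      then have abM: "(a, b) \<in> M" using orientM assms(2) by blast
      show False
      proof (cases "n = 1")
        case True
        then have "hd p = a" using la p(1) n_def path_ne by (simp add: hd_conv_nth)
        then show False using p(2) abM unfolding unmatched_def by auto
      next
        case False
        define k where "k = n - 2"
        have k: "Suc k = n - 1" "odd k" "Suc k < n" using False n0 ev k_def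
          by presburger+
        have kl: "Suc k < length p" using k(3) n_def by simp
        have "nb M (p ! k) (p ! Suc k)" using alt_path_edge(2)[OF p(1) kl] k(2) by simp
        moreover have "p ! k \<in> B" using sideA[OF p(1) hA, of k] k n_def by simp
        ultimately have "(p ! Suc k, p ! k) \<in> M" using orientM2 by blast
        then have "(a, p ! k) \<in> M" using k la by simp
        then have "b = p ! k" using M_fst abM by blast
        then show False using \<open>b \<notin> set p\<close> k n_def by auto
      qed
    qed
    have "nb E (last p) b" using assms(3) p(3) by (simp add: nb_def)
    moreover have "nb M (last p) b \<longleftrightarrow> odd (length p - 1)" using notM ev p(3) n_def by simp
    ultimately show ?thesis using reach_snoc[OF p(1,2) False] by blast
  qed
qed

lemma closeB:
  assumes "b \<in> TI" "b \<in> B" "(a, b) \<in> M"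
  shows "a \<in> TI"
proof -
  obtain p where p: "alternating_path E M p" "hd p \<in> unmatched A M" "last p = b"
    using assms(1) unfolding alt_reach_def by blast
  define n where "n = length p"
  have n0: "0 < n" using path_ne[OF p(1)] n_def by simp
  have hA: "hd p \<in> A" using p(2) unm_sub by blast
  have la: "p ! (n - 1) = b" using last_nth[OF p(1)] p(3) n_def by simp
  have od: "odd (n - 1)"
  proof (rule ccontr)
    assume "\<not> odd (n - 1)"
    then have "p ! (n-1) \<in> A" using sideA[OF p(1) hA, of "n-1"] n0 n_def by simp
    then show False using la assms(2) disj by auto
  qed
  show ?thesis
  proof (cases "a \<in> set p")
    case True
    then obtain j where "j < length p" "p ! j = a" by (auto simp: in_set_conv_nth)
    then show ?thesis using reach_nth[OF p(1,2)] by metis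
  next
    case False
    have "nb E (last p) a" using assms(3) ME p(3) by (auto simp: nb_def)
    moreover have "nb M (last p) a \<longleftrightarrow> odd (length p - 1)" using assms(3) od p(3) n_def by (simp add: nb_def)
    ultimately show ?thesis using reach_snoc[OF p(1,2) False] by blast
  qed
qed

lemma predB:
  assumes "b \<in> TI" "b \<in> B"
  shows "\<exists>a. a \<in> TI \<and> a \<in> A \<and> (a, b) \<in> E"
proof -
  obtain p where p: "alternating_path E M p" "hd p \<in> unmatched A M" "last p = b"
    using assms(1) unfolding alt_reach_def by blast
  define n where "n = length p"
  have n0: "0 < n" using path_ne[OF p(1)] n_def by simp
  have hA: "hd p \<in> A" using p(2) unm_sub by blast
  have la: "p ! (n - 1) = b" using last_nth[OF p(1)] p(3) n_def by simp
  have od: "odd (n - 1)"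
  proof (rule ccontr)
    assume "\<not> odd (n - 1)"
    then have "p ! (n-1) \<in> A" using sideA[OF p(1) hA, of "n-1"] n0 n_def by simp
    then show False using la assms(2) disj by auto
  qed
  then have n2: "n \<ge> 2" using n0 by presburger
  define k where "k = n - 2"
  have k: "Suc k = n - 1" "even k" "Suc k < n" using od n2 k_def
    by presburger+
  have "p ! k \<in> A" using sideA[OF p(1) hA, of k] k n_def by simp
  moreover have "p ! k \<in> TI" using reach_nth[OF p(1,2), of k] k n_def by simp
  moreover have kl: "Suc k < length p" using k(3) n_def by simp
  moreover have "nb E (p ! k) (p ! Suc k)" using alt_path_edge(1)[OF p(1) kl] .
  ultimately show ?thesis using orientE la k by metis
qed

end
context bm begin

lemma M_fst': "x \<in> M \<Longrightarrow> y \<in> M \<Longrightarrow> fst x = fst y \<Longrightarrow> x = y"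
  using M_fst by (cases x, cases y) auto

lemma M_snd': "x \<in> M \<Longrightarrow> y \<in> M \<Longrightarrow> snd x = snd y \<Longrightarrow> x = y"
  using M_snd by (cases x, cases y) auto

lemma unm_noM: "u \<in> unmatched S M \<Longrightarrow> (u, y) \<notin> M \<and> (y, u) \<notin> M"
  by (simp add: unmatched_def)

lemma no_aug:
  assumes max: "max_matching E M" and p: "alternating_path E M p"
    and h: "hd p \<in> unmatched A M" and l: "last p \<in> unmatched B M"
  shows False
proof -
  define n where "n = length p"
  have hA: "hd p \<in> A" using h unm_sub by blast
  have n0: "0 < n" using path_ne[OF p] n_def by simp
  have lB: "p ! (n - 1) \<in> B" using l last_nth[OF p] unm_sub n_def by auto
  have od: "odd (n - 1)"
  proof (rule ccontr)
    assume "\<not> odd (n - 1)"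
    then have "p ! (n - 1) \<in> A" using sideA[OF p hA, of "n - 1"] n0 n_def by simp
    then show False using lB disj by auto
  qed
  define m where "m = n div 2"
  have nm: "n = 2 * m" "m \<ge> 1" using od n0 m_def by presburger+
  have dist: "distinct p" using path_dist[OF p] .
  define e where "e i = (if even i then (p!i, p!Suc i) else (p!Suc i, p!i))" for i
  have eE: "e i \<in> E \<and> (e i \<in> M \<longleftrightarrow> odd i)" if i: "Suc i < n" for i
  proof -
    have il: "Suc i < length p" using i n_def by simp
    have nbE: "nb E (p!i) (p!Suc i)" using alt_path_edge(1)[OF p il] .
    have nbM: "nb M (p!i) (p!Suc i) \<longleftrightarrow> odd i" using alt_path_edge(2)[OF p il] .
    have si: "(even i \<longrightarrow> p!i \<in> A) \<and> (odd i \<longrightarrow> p!i \<in> B)" using sideA[OF p hA] il by simp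
    show ?thesis
    proof (cases "even i")
      case True
      then have pA: "p!i \<in> A" using si by simp
      have "(p!i, p!Suc i) \<in> E" using orientE[OF nbE pA] by simp
      moreover have "(p!i, p!Suc i) \<in> M \<longleftrightarrow> nb M (p!i) (p!Suc i)"
        using orientM[OF _ pA] by (auto simp: nb_def)
      ultimately show ?thesis using nbM True by (simp add: e_def)
    next
      case False
      then have pB: "p!i \<in> B" using si by simp
      have "(p!Suc i, p!i) \<in> E" using orientE2[OF nbE pB] by simp
      moreover have "(p!Suc i, p!i) \<in> M \<longleftrightarrow> nb M (p!i) (p!Suc i)"
        using orientM2[OF _ pB] by (auto simp: nb_def)
      ultimately show ?thesis using nbM False by (simp add: e_def)
    qed
  qed
  have fst_ev: "fst (e (2*j)) = p!(2*j)" for j by (simp add: e_def)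
  have snd_ev: "snd (e (2*j)) = p!(Suc (2*j))" for j by (simp add: e_def)
  have fst_od: "fst (e (2*j+1)) = p!(Suc (Suc (2*j)))" for j by (simp add: e_def)
  have snd_od: "snd (e (2*j+1)) = p!(Suc (2*j))" for j by (simp add: e_def)
  define Pe where "Pe = (\<lambda>j. e (2*j)) ` {..<m}"
  define Po where "Po = (\<lambda>j. e (2*j+1)) ` {..<m-1}"
  have PeE: "Pe \<subseteq> E" and PeM: "Pe \<inter> M = {}"
  proof -
    have "e (2*j) \<in> E \<and> e (2*j) \<notin> M" if "j < m" for j
      using eE[of "2*j"] that nm by simp
    then show "Pe \<subseteq> E" "Pe \<inter> M = {}" unfolding Pe_def by auto
  qed
  have PoM: "Po \<subseteq> M"
  proof -
    have "e (2*j+1) \<in> M" if "j < m - 1" for j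
      using eE[of "2*j+1"] that nm by simp
    then show "Po \<subseteq> M" unfolding Po_def by auto
  qed
  have injp: "p!a = p!b \<Longrightarrow> a < n \<Longrightarrow> b < n \<Longrightarrow> a = b" for a b
    using dist n_def nth_eq_iff_index_eq by blast
  have inj_e: "inj_on (\<lambda>j. e (2*j)) {..<m}"
  proof (rule inj_onI)
    fix a b assume "a \<in> {..<m}" "b \<in> {..<m}" "e (2*a) = e (2*b)"
    then have "p!(2*a) = p!(2*b)" "2*a < n" "2*b < n" using fst_ev nm by (metis, simp, simp)
    then show "a = b" using injp by fastforce
  qed
  have inj_o: "inj_on (\<lambda>j. e (2*j+1)) {..<m-1}"
  proof (rule inj_onI)
    fix a b assume "a \<in> {..<m-1}" "b \<in> {..<m-1}" "e (2*a+1) = e (2*b+1)"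
    then have "p!(Suc (Suc (2*a))) = p!(Suc (Suc (2*b)))" "Suc (Suc (2*a)) < n" "Suc (Suc (2*b)) < n"
      using fst_od nm by (metis, simp, simp)
    then show "a = b" using injp by fastforce
  qed
  have cPe: "card Pe = m" unfolding Pe_def using card_image[OF inj_e] by simp
  have cPo: "card Po = m - 1" unfolding Po_def using card_image[OF inj_o] by simp
  define M' where "M' = (M - Po) \<union> Pe"
  have finPe: "finite Pe" unfolding Pe_def by simp
  have finPo: "finite Po" unfolding Po_def by simp
  have cM': "card M' = card M + 1"
  proof -
    have "card M' = card (M - Po) + card Pe"
      unfolding M'_def using finM finPe PeM by (intro card_Un_disjoint) auto
    moreover have "card (M - Po) = card M - card Po" using card_Diff_subset[OF finPo PoM] .
    moreover have "card Po \<le> card M" using card_mono[OF finM PoM] .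
    ultimately show ?thesis using cPe cPo nm by simp
  qed
  have M'E: "M' \<subseteq> E" unfolding M'_def using ME PeE by auto
  have Pe_fst: "x \<in> Pe \<Longrightarrow> y \<in> M - Po \<Longrightarrow> fst x = fst y \<Longrightarrow> False" for x y
  proof -
    assume x: "x \<in> Pe" and y: "y \<in> M - Po" and f: "fst x = fst y"
    obtain j where j: "j < m" "x = e (2*j)" using x Pe_def by auto
    have fy: "fst y = p!(2*j)" using f j fst_ev by simp
    show False
    proof (cases j)
      case 0
      then have "fst y = hd p" using fy path_ne[OF p] by (simp add: hd_conv_nth)
      then show False using h y unm_noM[of "hd p" A "snd y"] by (cases y) auto
    next
      case (Suc j')
      have "Suc (2*j'+1) < n" using j Suc nm by simp
      then have "e (2*j'+1) \<in> M" using eE[of "2*j'+1"] by simp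
      moreover have "fst (e (2*j'+1)) = p!(2*j)" using fst_od[of j'] Suc by simp
      ultimately have "y = e (2*j'+1)" using M_fst' y fy by auto
      moreover have "j' < m - 1" using j Suc by simp
      ultimately have "y \<in> Po" unfolding Po_def by auto
      then show False using y by simp
    qed
  qed
  have Pe_snd: "x \<in> Pe \<Longrightarrow> y \<in> M - Po \<Longrightarrow> snd x = snd y \<Longrightarrow> False" for x y
  proof -
    assume x: "x \<in> Pe" and y: "y \<in> M - Po" and f: "snd x = snd y"
    obtain j where j: "j < m" "x = e (2*j)" using x Pe_def by auto
    have sy: "snd y = p!(Suc (2*j))" using f j snd_ev by simp
    show False
    proof (cases "j = m - 1")
      case True
      then have "Suc (2*j) = n - 1" using nm by simp
      then have "snd y = last p" using sy last_nth[OF p] n_def by simp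
      then show False using l y unm_noM[of "last p" B "fst y"] by (cases y) auto
    next
      case False
      then have jm: "j < m - 1" using j by simp
      have "Suc (2*j+1) < n" using jm nm by simp
      then have "e (2*j+1) \<in> M" using eE[of "2*j+1"] by simp
      moreover have "snd (e (2*j+1)) = p!(Suc (2*j))" using snd_od by simp
      ultimately have "y = e (2*j+1)" using M_snd' y sy by auto
      then have "y \<in> Po" unfolding Po_def using jm by auto
      then show False using y by simp
    qed
  qed
  have Pe_fst2: "x \<in> Pe \<Longrightarrow> y \<in> Pe \<Longrightarrow> fst x = fst y \<Longrightarrow> x = y" for x y
  proof -
    assume "x \<in> Pe" "y \<in> Pe" "fst x = fst y"
    then obtain a b where ab: "a < m" "b < m" "x = e (2*a)" "y = e (2*b)" "p!(2*a) = p!(2*b)"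
      unfolding Pe_def using fst_ev by auto
    then have "2*a = 2*b" using injp[of "2*a" "2*b"] nm by simp
    then show "x = y" using ab by simp
  qed
  have Pe_snd2: "x \<in> Pe \<Longrightarrow> y \<in> Pe \<Longrightarrow> snd x = snd y \<Longrightarrow> x = y" for x y
  proof -
    assume "x \<in> Pe" "y \<in> Pe" "snd x = snd y"
    then obtain a b where ab: "a < m" "b < m" "x = e (2*a)" "y = e (2*b)" "p!(Suc (2*a)) = p!(Suc (2*b))"
      unfolding Pe_def using snd_ev by auto
    then have "Suc (2*a) = Suc (2*b)" using injp[of "Suc (2*a)" "Suc (2*b)"] nm by simp
    then show "x = y" using ab by simp
  qed
  have "matching M'"
  proof (rule matching_AB[of M' A B])
    show "M' \<subseteq> A \<times> B" using M'E EAB by auto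
    show "A \<inter> B = {}" using disj .
    show "x = y" if "x \<in> M'" "y \<in> M'" "fst x = fst y" for x y
      using that Pe_fst[of x y] Pe_fst[of y x] Pe_fst2[of x y] M_fst'[of x y] unfolding M'_def by auto
    show "x = y" if "x \<in> M'" "y \<in> M'" "snd x = snd y" for x y
      using that Pe_snd[of x y] Pe_snd[of y x] Pe_snd2[of x y] M_snd'[of x y] unfolding M'_def by auto
  qed
  then have "card M' \<le> card M" using max M'E unfolding max_matching_def by blast
  then show False using cM' by simp
qed

end
lemma alt_path_intro:
  "p \<noteq> [] \<Longrightarrow> distinct p \<Longrightarrow>
   (\<And>i. Suc i < length p \<Longrightarrow> nb E (p!i) (p!Suc i) \<and> (nb M (p!i) (p!Suc i) \<longleftrightarrow> odd i)) \<Longrightarrow>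
   alternating_path E M p"
  unfolding alternating_path_def nb_def by blast

lemma nb_sym: "nb E x y = nb E y x" by (auto simp: nb_def)

context bm begin

lemma join:
  assumes p: "alternating_path E M p" "hd p \<in> A" and q: "alternating_path E M q" "hd q \<in> B"
    and eq: "last p = last q"
  shows "\<exists>r. alternating_path E M r \<and> hd r = hd p \<and> last r = hd q"
proof -
  define P where "P = {i. i < length p \<and> p!i \<in> set q}"
  have "length p - 1 \<in> P"
  proof -
    have "p ! (length p - 1) = last q" using last_nth[OF p(1)] eq by simp
    moreover have "last q \<in> set q" using path_ne[OF q(1)] by simp
    moreover have "length p - 1 < length p" using path_ne[OF p(1)] by simp
    ultimately show ?thesis unfolding P_def by simp
  qed
  define i where "i = (LEAST i. i \<in> P)"
  have iP: "i \<in> P" unfolding i_def by (rule LeastI) fact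
  have il: "i < length p" "p!i \<in> set q" using iP P_def by auto
  have imin: "p!k \<notin> set q" if "k < i" for k
  proof
    assume "p!k \<in> set q"
    then have "k \<in> P" using that il P_def by auto
    then have "i \<le> k" unfolding i_def by (rule Least_le)
    then show False using that by simp
  qed
  obtain j where j: "j < length q" "q!j = p!i" using il(2) by (auto simp: in_set_conv_nth)
  have par: "odd (i + j)"
  proof (rule ccontr)
    assume ev: "\<not> odd (i + j)"
    have sp: "(even i \<longrightarrow> p!i \<in> A) \<and> (odd i \<longrightarrow> p!i \<in> B)" using sideA[OF p il(1)] .
    have sq: "(even j \<longrightarrow> q!j \<in> B) \<and> (odd j \<longrightarrow> q!j \<in> A)" using sideB[OF q j(1)] .
    show False
    proof (cases "even i")
      case True
      then have "even j" using ev by presburger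
      then show False using sp sq True j(2) disj by auto
    next
      case False
      then have "odd j" using ev by presburger
      then show False using sp sq False j(2) disj by auto
    qed
  qed
  define f where "f k = (if k \<le> i then p!k else q!(i+j-k))" for k
  define r where "r = map f [0..<i+j+1]"
  have lr: "length r = i+j+1" unfolding r_def by simp
  have rn: "k < i+j+1 \<Longrightarrow> r!k = f k" for k unfolding r_def by (simp del: upt_Suc)
  have fq: "i \<le> k \<Longrightarrow> f k = q!(i+j-k)" for k
  proof -
    assume "i \<le> k"
    show "f k = q!(i+j-k)"
    proof (cases "k = i")
      case True then show ?thesis using j(2) by (simp add: f_def)
    next
      case False then show ?thesis using \<open>i \<le> k\<close> by (simp add: f_def)
    qed
  qed
  have distp: "distinct p" and distq: "distinct q" using path_dist p(1) q(1) by auto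
  have fne: "f a \<noteq> f b" if ab: "a < b" "b \<le> i+j" for a b
  proof (cases "b \<le> i")
    case True
    then have "f a = p!a" "f b = p!b" using ab by (auto simp: f_def)
    moreover have "p!a \<noteq> p!b" using distp ab True il(1) nth_eq_iff_index_eq by fastforce
    ultimately show ?thesis by simp
  next
    case False
    show ?thesis
    proof (cases "i \<le> a")
      case True
      then have "f a = q!(i+j-a)" "f b = q!(i+j-b)" using fq ab by auto
      moreover have "q!(i+j-a) \<noteq> q!(i+j-b)"
        using distq ab True j(1) nth_eq_iff_index_eq[OF distq, of "i+j-a" "i+j-b"] by simp
      ultimately show ?thesis by simp
    next
      case False
      then have "f a = p!a" "f b = q!(i+j-b)" using \<open>\<not> b \<le> i\<close> by (auto simp: f_def)
      moreover have "i+j-b < length q" using j(1) \<open>\<not> b \<le> i\<close> by simp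
      then have "q!(i+j-b) \<in> set q" by (rule nth_mem)
      moreover have "p!a \<notin> set q" using imin False by simp
      ultimately show ?thesis by auto
    qed
  qed
  have "alternating_path E M r"
  proof (rule alt_path_intro)
    show "r \<noteq> []" using lr by auto
    show "distinct r"
      unfolding distinct_conv_nth
    proof (intro allI impI)
      fix a b assume "a < length r" "b < length r" "a \<noteq> b"
      then show "r!a \<noteq> r!b" using fne[of a b] fne[of b a] rn lr
        by (cases "a < b") auto
    qed
    fix k assume k: "Suc k < length r"
    show "nb E (r!k) (r!Suc k) \<and> (nb M (r!k) (r!Suc k) \<longleftrightarrow> odd k)"
    proof (cases "Suc k \<le> i")
      case True
      then have "r!k = p!k" "r!Suc k = p!Suc k" using k lr rn by (auto simp: f_def)
      moreover have "Suc k < length p" using True il(1) by simp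
      ultimately show ?thesis using alt_path_edge[OF p(1)] by simp
    next
      case False
      define t where "t = i + j - Suc k"
      have t: "Suc t = i + j - k" "Suc t < length q" "odd t \<longleftrightarrow> odd k"
        using False k lr j(1) par t_def by presburger+
      have "r!k = q!Suc t" "r!Suc k = q!t" using k lr rn fq False t(1) t_def by auto
      moreover have "nb E (q!t) (q!Suc t)" "nb M (q!t) (q!Suc t) \<longleftrightarrow> odd t"
        using alt_path_edge[OF q(1) t(2)] by auto
      ultimately show ?thesis using nb_sym t(3) by metis
    qed
  qed
  moreover have "hd r = hd p"
  proof -
    have rne: "r \<noteq> []" using lr by auto
    have "hd r = r!0" using hd_conv_nth[OF rne] .
    also have "\<dots> = p!0" using rn[of 0] by (simp add: f_def)
    finally show ?thesis using hd_conv_nth[OF path_ne[OF p(1)]] by simp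
  qed
  moreover have "last r = hd q"
  proof -
    have rne: "r \<noteq> []" using lr by auto
    have "last r = r!(i+j)" using last_conv_nth[OF rne] lr by simp
    also have "\<dots> = q!0" using rn[of "i+j"] fq[of "i+j"] by simp
    finally show ?thesis using path_ne[OF q(1)] by (simp add: hd_conv_nth)
  qed
  ultimately show ?thesis by blast
qed

lemma TI_TIB:
  assumes max: "max_matching E M"
  shows "TI \<inter> TIB = {}"
proof (rule ccontr)
  assume "TI \<inter> TIB \<noteq> {}"
  then obtain x where "x \<in> TI" "x \<in> TIB" by blast
  then obtain p q where p: "alternating_path E M p" "hd p \<in> unmatched A M" "last p = x"
    and q: "alternating_path E M q" "hd q \<in> unmatched B M" "last q = x"
    unfolding alt_reach_def by blast
  have "hd p \<in> A" "hd q \<in> B" using p(2) q(2) unm_sub by blast+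
  then obtain r where r: "alternating_path E M r" "hd r = hd p" "last r = hd q"
    using join[OF p(1) _ q(1)] p(3) q(3) by metis
  show False using no_aug[OF max r(1)] r p(2) q(2) by simp
qed

lemma pm_M:
  assumes "a \<in> A" "a \<notin> unmatched A M"
  shows "(a, pm M a) \<in> M"
proof -
  obtain y where "(a, y) \<in> M \<or> (y, a) \<in> M" using assms unfolding unmatched_def by auto
  moreover have "(y, a) \<notin> M" using assms(1) ME EAB disj by auto
  ultimately have "(a, y) \<in> M" by simp
  then show ?thesis unfolding pm_def by (rule someI)
qed

lemma adj_sub: "X \<subseteq> A \<Longrightarrow> adj E X \<subseteq> B"
  unfolding adj_def using EAB disj by auto

lemma fin_adj: "X \<subseteq> A \<Longrightarrow> finite (adj E X)"
  using adj_sub fB finite_subset by blast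

lemma pm_parts:
  assumes X: "X \<subseteq> A"
  shows "inj_on (pm M) (X - unmatched A M)" "pm M ` (X - unmatched A M) \<subseteq> adj E X"
proof -
  show "inj_on (pm M) (X - unmatched A M)"
  proof (rule inj_onI)
    fix a a' assume "a \<in> X - unmatched A M" "a' \<in> X - unmatched A M" "pm M a = pm M a'"
    then show "a = a'" using pm_M[of a] pm_M[of a'] X M_snd by auto
  qed
  show "pm M ` (X - unmatched A M) \<subseteq> adj E X"
  proof
    fix y assume "y \<in> pm M ` (X - unmatched A M)"
    then obtain a where a: "a \<in> X" "a \<notin> unmatched A M" "y = pm M a" by auto
    then have "(a, y) \<in> E" using pm_M[of a] X ME by auto
    then show "y \<in> adj E X" using a(1) unfolding adj_def by auto
  qed
qed

lemma defic_parts: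
  assumes X: "X \<subseteq> A"
  shows "card (X \<inter> unmatched A M) \<le> card (unmatched A M)" "card (X - unmatched A M) \<le> card (adj E X)"
    "card X = card (X \<inter> unmatched A M) + card (X - unmatched A M)"
proof -
  have fX: "finite X" using X fA finite_subset by blast
  have fU: "finite (unmatched A M)" using unm_sub fA finite_subset by blast
  show "card (X \<inter> unmatched A M) \<le> card (unmatched A M)" using fU by (intro card_mono) auto
  show "card (X - unmatched A M) \<le> card (adj E X)"
    using card_inj_on_le[OF pm_parts[OF X] fin_adj[OF X]] .
  show "card X = card (X \<inter> unmatched A M) + card (X - unmatched A M)"
    using card_Int_Diff[OF fX] .
qed

lemma defic:
  assumes X: "X \<subseteq> A"
  shows "card X \<le> card (adj E X) + card (unmatched A M)"
  using defic_parts[OF X] by simp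

lemma D2:
  assumes max: "max_matching E M"
  shows "adj E (A \<inter> TI) = B \<inter> TI" "card (A \<inter> TI) = card (B \<inter> TI) + card (unmatched A M)"
proof -
  show "adj E (A \<inter> TI) = B \<inter> TI"
  proof
    show "adj E (A \<inter> TI) \<subseteq> B \<inter> TI"
    proof
      fix y assume "y \<in> adj E (A \<inter> TI)"
      then obtain x where x: "x \<in> A \<inter> TI" "(x, y) \<in> E \<or> (y, x) \<in> E" unfolding adj_def by auto
      have "(y, x) \<notin> E" using x(1) EAB disj by auto
      then have "(x, y) \<in> E" using x(2) by simp
      then show "y \<in> B \<inter> TI" using closeA[of x y] x(1) EAB by auto
    qed
    show "B \<inter> TI \<subseteq> adj E (A \<inter> TI)"
    proof
      fix b assume "b \<in> B \<inter> TI"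
      then obtain a where "a \<in> TI" "a \<in> A" "(a, b) \<in> E" using predB by blast
      then show "b \<in> adj E (A \<inter> TI)" unfolding adj_def by auto
    qed
  qed
  let ?U = "unmatched A M"
  have UT: "?U \<subseteq> A \<inter> TI" using unm_reach[of A] unm_sub[of A] by blast
  have fT: "finite (A \<inter> TI)" using fA by simp
  have c1: "card (A \<inter> TI) = card ?U + card (A \<inter> TI - ?U)"
    using card_Int_Diff[OF fT, of ?U] UT by (simp add: Int_absorb1)
  have "pm M ` (A \<inter> TI - ?U) = B \<inter> TI"
  proof
    show "pm M ` (A \<inter> TI - ?U) \<subseteq> B \<inter> TI"
    proof
      fix y assume "y \<in> pm M ` (A \<inter> TI - ?U)"
      then obtain a where a: "a \<in> A" "a \<in> TI" "a \<notin> ?U" "y = pm M a" by auto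
      then have "(a, y) \<in> M" using pm_M by auto
      then show "y \<in> B \<inter> TI" using closeA[of a y] a ME EAB by auto
    qed
    show "B \<inter> TI \<subseteq> pm M ` (A \<inter> TI - ?U)"
    proof
      fix b assume b: "b \<in> B \<inter> TI"
      have "b \<notin> unmatched B M"
      proof
        assume "b \<in> unmatched B M"
        then have "b \<in> TIB" using unm_reach[of B] by blast
        then show False using TI_TIB[OF max] b by blast
      qed
      then obtain y where "(b, y) \<in> M \<or> (y, b) \<in> M" using b unfolding unmatched_def by auto
      moreover have "(b, y) \<notin> M" using b ME EAB disj by auto
      ultimately have ab: "(y, b) \<in> M" by simp
      have yA: "y \<in> A" using ab ME EAB by auto
      have yT: "y \<in> TI" using closeB[OF _ _ ab] b by auto
      have yU: "y \<notin> ?U" using ab unm_noM by blast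
      have "pm M y = b" using pm_M[OF yA yU] ab M_fst by blast
      then show "b \<in> pm M ` (A \<inter> TI - ?U)" using yA yT yU by force
    qed
  qed
  moreover have "inj_on (pm M) (A \<inter> TI - ?U)" using pm_parts(1)[of "A \<inter> TI"] by simp
  ultimately have "card (A \<inter> TI - ?U) = card (B \<inter> TI)" using card_image by metis
  then show "card (A \<inter> TI) = card (B \<inter> TI) + card ?U" using c1 by simp
qed

lemma D3:
  assumes X: "X \<subseteq> A" and c: "card X = card (adj E X) + card (unmatched A M)"
  shows "A \<inter> TI \<subseteq> X"
proof -
  let ?U = "unmatched A M"
  have fU: "finite ?U" using unm_sub fA finite_subset by blast
  note dp = defic_parts[OF X]
  have e1: "card (X \<inter> ?U) = card ?U" and e2: "card (X - ?U) = card (adj E X)" using dp c by linarith+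
  have UX: "?U \<subseteq> X" using card_subset_eq[OF fU _ e1] by blast
  have im: "pm M ` (X - ?U) = adj E X"
    using card_subset_eq[OF fin_adj[OF X] pm_parts(2)[OF X]] e2 card_image[OF pm_parts(1)[OF X]] by simp
  show ?thesis
  proof
    fix a assume a: "a \<in> A \<inter> TI"
    then obtain p where p: "alternating_path E M p" "hd p \<in> ?U" "last p = a"
      unfolding alt_reach_def by blast
    have hA: "hd p \<in> A" using p(2) unm_sub by blast
    have key: "2*j < length p \<longrightarrow> p!(2*j) \<in> X" for j
    proof (induction j)
      case 0
      then show ?case using p(2) UX path_ne[OF p(1)] by (auto simp: hd_conv_nth)
    next
      case (Suc j)
      show ?case
      proof
        assume l: "2 * Suc j < length p"
        then have IH: "p!(2*j) \<in> X" using Suc by simp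
        have l1: "Suc (2*j) < length p" using l by simp
        have l2: "Suc (Suc (2*j)) < length p" using l by simp
        have sA: "p!(2*j) \<in> A" using sideA[OF p(1) hA, of "2*j"] l by simp
        have sB: "p!(Suc (2*j)) \<in> B" using sideA[OF p(1) hA, of "Suc (2*j)"] l by simp
        have "(p!(2*j), p!(Suc (2*j))) \<in> E" using orientE[OF alt_path_edge(1)[OF p(1) l1] sA] by simp
        then have "p!(Suc (2*j)) \<in> adj E X" using IH unfolding adj_def by auto
        then obtain a' where a': "a' \<in> X - ?U" "pm M a' = p!(Suc (2*j))" using im by force
        have m1: "(a', p!(Suc (2*j))) \<in> M" using pm_M[of a'] a' X by auto
        have "nb M (p!(Suc (2*j))) (p!(Suc (Suc (2*j))))" using alt_path_edge(2)[OF p(1) l2] by simp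
        then have m2: "(p!(Suc (Suc (2*j))), p!(Suc (2*j))) \<in> M" using orientM2 sB by blast
        have "a' = p!(Suc (Suc (2*j)))" using M_snd[OF m1 m2] .
        then show "p!(2 * Suc j) \<in> X" using a' by simp
      qed
    qed
    define n where "n = length p"
    have n0: "0 < n" using path_ne[OF p(1)] n_def by simp
    have la: "p ! (n - 1) = a" using last_nth[OF p(1)] p(3) n_def by simp
    have ev: "even (n - 1)"
    proof (rule ccontr)
      assume "\<not> even (n - 1)"
      then have "p ! (n-1) \<in> B" using sideA[OF p(1) hA, of "n-1"] n0 n_def by simp
      then show False using la a disj by auto
    qed
    from ev obtain j where "n - 1 = 2*j" by (rule evenE)
    moreover from this have "2*j < length p" using n0 n_def by arith
    ultimately show "a \<in> X" using key[of j] la by simp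
  qed
qed

end

lemma TI_indep:
  assumes b1: "bm A B E M1" and b2: "bm A B E M2"
    and m1: "max_matching E M1" and m2: "max_matching E M2"
  shows "alt_reach E M1 (unmatched A M1) = alt_reach E M2 (unmatched A M2)"
proof -
  interpret i1: bm A B E M1 by (rule b1)
  interpret i2: bm A B E M2 by (rule b2)
  let ?T1 = "alt_reach E M1 (unmatched A M1)" and ?T2 = "alt_reach E M2 (unmatched A M2)"
  have c1: "card (A \<inter> ?T1) = card (adj E (A \<inter> ?T1)) + card (unmatched A M1)"
    using i1.D2[OF m1] by simp
  have c2: "card (A \<inter> ?T2) = card (adj E (A \<inter> ?T2)) + card (unmatched A M2)"
    using i2.D2[OF m2] by simp
  have "card (A \<inter> ?T1) \<le> card (adj E (A \<inter> ?T1)) + card (unmatched A M2)"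
    using i2.defic[of "A \<inter> ?T1"] by simp
  moreover have "card (A \<inter> ?T2) \<le> card (adj E (A \<inter> ?T2)) + card (unmatched A M1)"
    using i1.defic[of "A \<inter> ?T2"] by simp
  ultimately have k: "card (unmatched A M1) = card (unmatched A M2)" using c1 c2 by linarith
  have "A \<inter> ?T2 \<subseteq> A \<inter> ?T1" using i2.D3[of "A \<inter> ?T1"] c1 k by simp
  moreover have "A \<inter> ?T1 \<subseteq> A \<inter> ?T2" using i1.D3[of "A \<inter> ?T2"] c2 k by simp
  ultimately have eqA: "A \<inter> ?T1 = A \<inter> ?T2" by blast
  have "B \<inter> ?T1 = B \<inter> ?T2" using i1.D2(1)[OF m1] i2.D2(1)[OF m2] eqA by simp
  then show ?thesis using eqA i1.TI_sub i2.TI_sub by blast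
qed
lemma adj_Un: "adj E (X \<union> Y) = adj E X \<union> adj E Y"
  unfolding adj_def by auto

lemma adj_mono: "X \<subseteq> Y \<Longrightarrow> adj E X \<subseteq> adj E Y"
  unfolding adj_def by auto

lemma adj_mono_E: "E1 \<subseteq> E2 \<Longrightarrow> adj E1 X \<subseteq> adj E2 X"
  unfolding adj_def by auto

lemma sc_cong:
  assumes "\<And>T. T \<subseteq> S \<Longrightarrow> adj E1 T = adj E2 T"
  shows "self_contained_set E1 S = self_contained_set E2 S"
  unfolding self_contained_set_def using assms by auto

definition clus :: "('a \<times> 'a) set \<Rightarrow> 'a set \<Rightarrow> 'a set \<Rightarrow> 'a set" where
  "clus E R S = S \<union> adj (E \<inter> (R \<times> R)) S"

definition nedges :: "('a \<times> 'a) set \<Rightarrow> 'a set \<Rightarrow> 'a set \<Rightarrow> ('a \<times> 'a set) set" where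
  "nedges E R S = {(v, clus E R S) | v. v \<in> adj E S - adj (E \<inter> (R \<times> R)) S}"

lemma step_iff:
  "alg1_step F E (R, Vc, Ec) st' \<longleftrightarrow> R \<noteq> {} \<and>
     (\<exists>S. min_self_contained (F \<inter> R) (E \<inter> (R \<times> R)) S \<and>
        st' = (R - clus E R S, insert (clus E R S) Vc, Ec \<union> nedges E R S))"
proof
  assume "alg1_step F E (R, Vc, Ec) st'"
  then show "R \<noteq> {} \<and> (\<exists>S. min_self_contained (F \<inter> R) (E \<inter> (R \<times> R)) S \<and>
        st' = (R - clus E R S, insert (clus E R S) Vc, Ec \<union> nedges E R S))"
    by (cases rule: alg1_step.cases) (auto simp: clus_def nedges_def)
next
  assume "R \<noteq> {} \<and> (\<exists>S. min_self_contained (F \<inter> R) (E \<inter> (R \<times> R)) S \<and>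
        st' = (R - clus E R S, insert (clus E R S) Vc, Ec \<union> nedges E R S))"
  then obtain S where S: "R \<noteq> {}" "min_self_contained (F \<inter> R) (E \<inter> (R \<times> R)) S"
    "st' = (R - clus E R S, insert (clus E R S) Vc, Ec \<union> nedges E R S)" by blast
  show "alg1_step F E (R, Vc, Ec) st'"
    unfolding S(3) clus_def nedges_def by (rule alg1_step.intros[OF S(1,2) refl])
qed

locale a1 =
  fixes V F :: "'a set" and E :: "('a \<times> 'a) set"
  assumes finV: "finite V" and finF: "finite F" and disjVF: "V \<inter> F = {}" and EVF: "E \<subseteq> V \<times> F"
begin

abbreviation aR :: "'a set \<Rightarrow> 'a set \<Rightarrow> 'a set" where "aR R \<equiv> adj (E \<inter> (R \<times> R))"

definition inv :: "'a set \<Rightarrow> bool" where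
  "inv R \<longleftrightarrow> R \<subseteq> V \<union> F \<and> card (F \<inter> R) = card (V \<inter> R) \<and>
     (\<forall>G \<subseteq> F \<inter> R. card G \<le> card (aR R G))"

lemma aR_sub: "S \<subseteq> F \<Longrightarrow> aR R S \<subseteq> V \<inter> R"
  unfolding adj_def using EVF disjVF by auto

lemma fin_aR: "S \<subseteq> F \<Longrightarrow> finite (aR R S)"
  using finite_subset[OF aR_sub, of S R] finV by blast

lemma msc_D:
  assumes "min_self_contained (F \<inter> R) (E \<inter> (R \<times> R)) S"
  shows "S \<noteq> {}" "S \<subseteq> F \<inter> R" "card S = card (aR R S)" "\<And>G. G \<subseteq> S \<Longrightarrow> card G \<le> card (aR R G)"
    "\<And>S'. S' \<subset> S \<Longrightarrow> S' \<noteq> {} \<Longrightarrow> \<not> self_contained_set (E \<inter> (R \<times> R)) S'"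
proof -
  have h: "S \<noteq> {}" "S \<subseteq> F \<inter> R" "self_contained_set (E \<inter> (R \<times> R)) S"
    "\<And>S'. S' \<subset> S \<and> S' \<noteq> {} \<longrightarrow> \<not> self_contained_set (E \<inter> (R \<times> R)) S'"
    using assms unfolding min_self_contained_def by blast+
  show "S \<noteq> {}" "S \<subseteq> F \<inter> R" using h by blast+
  show "card S = card (aR R S)" using h(3) unfolding self_contained_set_def by blast
  show "\<And>G. G \<subseteq> S \<Longrightarrow> card G \<le> card (aR R G)" using h(3) unfolding self_contained_set_def by blast
  show "\<And>S'. S' \<subset> S \<Longrightarrow> S' \<noteq> {} \<Longrightarrow> \<not> self_contained_set (E \<inter> (R \<times> R)) S'" using h(4) by blast
qed

lemma inv_fin: "inv R \<Longrightarrow> finite R"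
proof -
  assume "inv R"
  then have "R \<subseteq> V \<union> F" unfolding inv_def by blast
  then show "finite R" using finite_subset finV finF by (metis finite_Un)
qed

lemma inv_step:
  assumes I: "inv R" and S: "min_self_contained (F \<inter> R) (E \<inter> (R \<times> R)) S"
  shows "inv (R - clus E R S)"
proof -
  note s = msc_D[OF S]
  let ?C = "clus E R S" let ?R' = "R - ?C"
  have SF: "S \<subseteq> F" using s(2) by auto
  have aS: "aR R S \<subseteq> V \<inter> R" using aR_sub[OF SF] .
  have fS: "finite S" using finite_subset[OF SF finF] .
  have fa: "finite (aR R S)" using fin_aR[OF SF] .
  have e1: "F \<inter> ?R' = F \<inter> R - S" using aS disjVF unfolding clus_def by blast
  have e2: "V \<inter> ?R' = V \<inter> R - aR R S" using SF disjVF unfolding clus_def by blast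
  have c1: "card (F \<inter> ?R') = card (F \<inter> R) - card S" using e1 card_Diff_subset[OF fS] s(2) by simp
  have c2: "card (V \<inter> ?R') = card (V \<inter> R) - card (aR R S)" using e2 card_Diff_subset[OF fa] aS by simp
  have hall: "card G \<le> card (aR ?R' G)" if G: "G \<subseteq> F \<inter> ?R'" for G
  proof -
    have GF: "G \<subseteq> F" using G by auto
    have fG: "finite G" using finite_subset[OF GF finF] .
    have GS: "G \<inter> S = {}" using G unfolding clus_def by blast
    have "G \<union> S \<subseteq> F \<inter> R" using G s(2) by blast
    then have "card (G \<union> S) \<le> card (aR R (G \<union> S))" using I unfolding inv_def by blast
    moreover have "card (G \<union> S) = card G + card S" using card_Un_disjoint[OF fG fS GS] .
    moreover have "aR R (G \<union> S) = (aR R G - aR R S) \<union> aR R S"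
      unfolding adj_Un by (rule Un_Diff_cancel2[symmetric])
    moreover have "card ((aR R G - aR R S) \<union> aR R S) = card (aR R G - aR R S) + card (aR R S)"
      using fin_aR[OF GF] fa by (intro card_Un_disjoint) auto
    ultimately have "card G + card S \<le> card (aR R G - aR R S) + card (aR R S)" by simp
    then have "card G \<le> card (aR R G - aR R S)" using s(3) by linarith
    moreover have "aR R G - aR R S \<subseteq> aR ?R' G"
    proof
      fix y assume y: "y \<in> aR R G - aR R S"
      have yV: "y \<in> V \<inter> R" using y aR_sub[OF GF] by blast
      then have yR': "y \<in> ?R'" using y SF disjVF unfolding clus_def by auto
      from y obtain x where x: "x \<in> G" "(x, y) \<in> E \<inter> (R \<times> R) \<or> (y, x) \<in> E \<inter> (R \<times> R)"
        unfolding adj_def by blast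
      have "x \<in> ?R'" using x(1) G by auto
      then show "y \<in> aR ?R' G" using x yR' unfolding adj_def by blast
    qed
    then have "card (aR R G - aR R S) \<le> card (aR ?R' G)" using fin_aR[OF GF] by (rule card_mono[rotated])
    ultimately show ?thesis by linarith
  qed
  show ?thesis unfolding inv_def using I c1 c2 s(3) hall unfolding inv_def by auto
qed

lemma inv_sc:
  assumes I: "inv R"
  shows "self_contained_set (E \<inter> (R \<times> R)) (F \<inter> R)"
proof -
  have "card (F \<inter> R) \<le> card (aR R (F \<inter> R))" using I unfolding inv_def by blast
  moreover have "card (aR R (F \<inter> R)) \<le> card (V \<inter> R)"
    using aR_sub[of "F \<inter> R" R] finV by (intro card_mono) auto
  ultimately have "card (F \<inter> R) = card (aR R (F \<inter> R))" using I unfolding inv_def by linarith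
  then show ?thesis using I unfolding inv_def self_contained_set_def by blast
qed

lemma progress:
  assumes I: "inv R" and R: "R \<noteq> {}"
  shows "\<exists>S. min_self_contained (F \<inter> R) (E \<inter> (R \<times> R)) S"
proof -
  have "F \<inter> R \<noteq> {}"
  proof
    assume "F \<inter> R = {}"
    then have "card (V \<inter> R) = 0" using I unfolding inv_def by simp
    then have "V \<inter> R = {}" using finV by simp
    then show False using \<open>F \<inter> R = {}\<close> R I unfolding inv_def by blast
  qed
  define P where "P S \<longleftrightarrow> S \<noteq> {} \<and> S \<subseteq> F \<inter> R \<and> self_contained_set (E \<inter> (R \<times> R)) S" for S
  have "P (F \<inter> R)" unfolding P_def using \<open>F \<inter> R \<noteq> {}\<close> inv_sc[OF I] by simp
  then obtain S where S: "P S" "\<And>S'. P S' \<Longrightarrow> card S \<le> card S'"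
    using ex_has_least_nat[of P "F \<inter> R" card] by blast
  have "S \<subseteq> F" using S(1) unfolding P_def by blast
  then have fS: "finite S" using finite_subset finF by blast
  have "min_self_contained (F \<inter> R) (E \<inter> (R \<times> R)) S"
    unfolding min_self_contained_def
  proof (intro conjI allI impI)
    show "S \<noteq> {}" "S \<subseteq> F \<inter> R" "self_contained_set (E \<inter> (R \<times> R)) S" using S(1) P_def by auto
    fix S' assume S': "S' \<subset> S \<and> S' \<noteq> {}"
    show "\<not> self_contained_set (E \<inter> (R \<times> R)) S'"
    proof
      assume "self_contained_set (E \<inter> (R \<times> R)) S'"
      then have "P S'" using S' S(1) unfolding P_def by auto
      then have "card S \<le> card S'" using S(2) by blast
      moreover have "card S' < card S" using psubset_card_mono[OF fS] S' by blast
      ultimately show False by simp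
    qed
  qed
  then show ?thesis by blast
qed

lemma diamond_disj:
  assumes I: "inv R" and S1: "min_self_contained (F \<inter> R) (E \<inter> (R \<times> R)) S1"
    and S2: "min_self_contained (F \<inter> R) (E \<inter> (R \<times> R)) S2" and ne: "S1 \<noteq> S2"
  shows "S1 \<inter> S2 = {}" "aR R S1 \<inter> aR R S2 = {}"
proof -
  note s1 = msc_D[OF S1] and s2 = msc_D[OF S2]
  have F1: "S1 \<subseteq> F" and F2: "S2 \<subseteq> F" using s1(2) s2(2) by auto
  have f1: "finite S1" and f2: "finite S2" using finite_subset[OF F1 finF] finite_subset[OF F2 finF] by auto
  have fa1: "finite (aR R S1)" and fa2: "finite (aR R S2)" using fin_aR F1 F2 by blast+
  let ?I = "S1 \<inter> S2"
  have u1: "card (aR R S1 \<union> aR R S2) + card (aR R S1 \<inter> aR R S2) = card (aR R S1) + card (aR R S2)"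
    using card_Un_Int[OF fa1 fa2] by simp
  have u2: "card S1 + card S2 = card (S1 \<union> S2) + card ?I" using card_Un_Int[OF f1 f2] .
  have h1: "card (S1 \<union> S2) \<le> card (aR R S1 \<union> aR R S2)"
  proof -
    have "S1 \<union> S2 \<subseteq> F \<inter> R" using s1(2) s2(2) by auto
    then have "card (S1 \<union> S2) \<le> card (aR R (S1 \<union> S2))" using I unfolding inv_def by blast
    then show ?thesis using adj_Un by metis
  qed
  have h2: "card ?I \<le> card (aR R ?I)" using s1(4)[of ?I] by auto
  have h3: "card (aR R ?I) \<le> card (aR R S1 \<inter> aR R S2)"
    using adj_mono[of ?I S1] adj_mono[of ?I S2] fa1 by (intro card_mono) auto
  have cI: "card ?I = card (aR R ?I)" and cA: "card (aR R S1 \<inter> aR R S2) = card ?I"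
    using u1 u2 h1 h2 h3 s1(3) s2(3) by linarith+
  show "?I = {}"
  proof (rule ccontr)
    assume Ine: "?I \<noteq> {}"
    have sc: "self_contained_set (E \<inter> (R \<times> R)) ?I"
      unfolding self_contained_set_def using cI s1(4) by auto
    show False
    proof (cases "?I = S1")
      case True
      then have "S1 \<subset> S2" using ne by blast
      then show False using s2(5)[of S1] s1(1) S1 unfolding min_self_contained_def by blast
    next
      case False
      then have "?I \<subset> S1" by blast
      then show False using s1(5) Ine sc by blast
    qed
  qed
  then have "card (aR R S1 \<inter> aR R S2) = 0" using cA by simp
  then show "aR R S1 \<inter> aR R S2 = {}" using fa1 by simp
qed

lemma commute:
  assumes I: "inv R" and S1: "min_self_contained (F \<inter> R) (E \<inter> (R \<times> R)) S1"
    and S2: "min_self_contained (F \<inter> R) (E \<inter> (R \<times> R)) S2" and ne: "S1 \<noteq> S2"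
  defines "R1 \<equiv> R - clus E R S1"
  shows "min_self_contained (F \<inter> R1) (E \<inter> (R1 \<times> R1)) S2"
    "clus E R1 S2 = clus E R S2" "nedges E R1 S2 = nedges E R S2"
proof -
  note s1 = msc_D[OF S1] and s2 = msc_D[OF S2]
  note dd = diamond_disj[OF I S1 S2 ne]
  have F1: "S1 \<subseteq> F" and F2: "S2 \<subseteq> F" using s1(2) s2(2) by auto
  have R1R: "R1 \<subseteq> R" unfolding R1_def by auto
  have S2R1: "S2 \<subseteq> R1" using s2(2) dd(1) aR_sub[OF F1, of R] F2 disjVF unfolding R1_def clus_def by auto
  have eq: "aR R1 T = aR R T" if T: "T \<subseteq> S2" for T
  proof
    show "aR R1 T \<subseteq> aR R T" using R1R by (intro adj_mono_E) auto
    show "aR R T \<subseteq> aR R1 T"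
    proof
      fix y assume y: "y \<in> aR R T"
      have "y \<in> aR R S2" using adj_mono[OF T] y by blast
      then have "y \<notin> aR R S1" using dd(2) by blast
      moreover have "y \<in> V \<inter> R" using y aR_sub[of T R] T F2 by blast
      ultimately have yR1: "y \<in> R1" using F1 disjVF unfolding R1_def clus_def by auto
      from y obtain x where x: "x \<in> T" "(x, y) \<in> E \<inter> (R \<times> R) \<or> (y, x) \<in> E \<inter> (R \<times> R)"
        unfolding adj_def by blast
      have "x \<in> R1" using x(1) T S2R1 by auto
      then show "y \<in> aR R1 T" using x yR1 unfolding adj_def by blast
    qed
  qed
  show "min_self_contained (F \<inter> R1) (E \<inter> (R1 \<times> R1)) S2"
    unfolding min_self_contained_def
  proof (intro conjI allI impI)
    show "S2 \<noteq> {}" using s2(1) .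
    show "S2 \<subseteq> F \<inter> R1" using F2 S2R1 by auto
    show "self_contained_set (E \<inter> (R1 \<times> R1)) S2"
      using sc_cong[of S2 "E \<inter> (R1 \<times> R1)" "E \<inter> (R \<times> R)"] eq S2
      unfolding min_self_contained_def by blast
    fix S' assume S': "S' \<subset> S2 \<and> S' \<noteq> {}"
    then have "\<not> self_contained_set (E \<inter> (R \<times> R)) S'" using s2(5) by blast
    moreover have "self_contained_set (E \<inter> (R1 \<times> R1)) S' = self_contained_set (E \<inter> (R \<times> R)) S'"
      using sc_cong[of S' "E \<inter> (R1 \<times> R1)" "E \<inter> (R \<times> R)"] eq S' by blast
    ultimately show "\<not> self_contained_set (E \<inter> (R1 \<times> R1)) S'" by simp
  qed
  show c: "clus E R1 S2 = clus E R S2" unfolding clus_def using eq by simp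
  show "nedges E R1 S2 = nedges E R S2" unfolding nedges_def c using eq by simp
qed

end
context a1 begin

lemma rtr_empty: assumes "(alg1_step F E)\<^sup>*\<^sup>* ({}, Vc, Ec) st" shows "st = ({}, Vc, Ec)"
  using assms by (cases rule: converse_rtranclpE) (auto simp: step_iff)

lemma clus_sub:
  assumes S: "min_self_contained (F \<inter> R) (E \<inter> (R \<times> R)) S"
  shows "clus E R S \<subseteq> R" "S \<subseteq> clus E R S" "clus E R S \<noteq> {}"
proof -
  note s = msc_D[OF S]
  have "S \<subseteq> F" using s(2) by blast
  then have "aR R S \<subseteq> R" using aR_sub by blast
  then show "clus E R S \<subseteq> R" using s(2) unfolding clus_def by blast
  show "S \<subseteq> clus E R S" unfolding clus_def by blast
  then show "clus E R S \<noteq> {}" using s(1) by blast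
qed

lemma step_card:
  assumes I: "inv R" and S: "min_self_contained (F \<inter> R) (E \<inter> (R \<times> R)) S"
  shows "card (R - clus E R S) < card R"
proof -
  have "R - clus E R S \<subset> R" using clus_sub[OF S] by blast
  then show ?thesis using psubset_card_mono[OF inv_fin[OF I]] by blast
qed

lemma exists_term:
  "inv R \<Longrightarrow> \<exists>Vc' Ec'. (alg1_step F E)\<^sup>*\<^sup>* (R, Vc, Ec) ({}, Vc', Ec')"
proof (induction "card R" arbitrary: R Vc Ec rule: less_induct)
  case less
  show ?case
  proof (cases "R = {}")
    case True
    then show ?thesis by blast
  next
    case False
    obtain S where S: "min_self_contained (F \<inter> R) (E \<inter> (R \<times> R)) S"
      using progress[OF less.prems False] by blast
    define st1 where "st1 = (R - clus E R S, insert (clus E R S) Vc, Ec \<union> nedges E R S)"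
    have st: "alg1_step F E (R, Vc, Ec) st1" unfolding st1_def using step_iff False S by blast
    have "inv (R - clus E R S)" using inv_step[OF less.prems S] .
    moreover have "card (R - clus E R S) < card R" using step_card[OF less.prems S] .
    ultimately obtain Vc' Ec' where
      "(alg1_step F E)\<^sup>*\<^sup>* (R - clus E R S, insert (clus E R S) Vc, Ec \<union> nedges E R S) ({}, Vc', Ec')"
      using less.hyps by blast
    then have "(alg1_step F E)\<^sup>*\<^sup>* (R, Vc, Ec) ({}, Vc', Ec')"
      using converse_rtranclp_into_rtranclp[of "alg1_step F E", OF st] unfolding st1_def by blast
    then show ?thesis by blast
  qed
qed

lemma first_step:
  assumes "(alg1_step F E)\<^sup>*\<^sup>* (R, Vc, Ec) ({}, a, b)" "R \<noteq> {}"
  shows "\<exists>S. min_self_contained (F \<inter> R) (E \<inter> (R \<times> R)) S \<and>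
     (alg1_step F E)\<^sup>*\<^sup>* (R - clus E R S, insert (clus E R S) Vc, Ec \<union> nedges E R S) ({}, a, b)"
  using assms(1)
proof (cases rule: converse_rtranclpE)
  case base
  then show ?thesis using assms(2) by simp
next
  case (step y)
  then obtain S where "min_self_contained (F \<inter> R) (E \<inter> (R \<times> R)) S"
     "y = (R - clus E R S, insert (clus E R S) Vc, Ec \<union> nedges E R S)"
    using step_iff by blast
  then show ?thesis using step(2) by blast
qed

lemma unique_term:
  "inv R \<Longrightarrow> (alg1_step F E)\<^sup>*\<^sup>* (R, Vc, Ec) ({}, a, b) \<Longrightarrow>
    (alg1_step F E)\<^sup>*\<^sup>* (R, Vc, Ec) ({}, a', b') \<Longrightarrow> a = a' \<and> b = b'"
proof (induction "card R" arbitrary: R Vc Ec a b a' b' rule: less_induct)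
  case less
  show ?case
  proof (cases "R = {}")
    case True
    then show ?thesis using rtr_empty less.prems(2,3) by blast
  next
    case False
    obtain S1 where S1: "min_self_contained (F \<inter> R) (E \<inter> (R \<times> R)) S1" and
      r1: "(alg1_step F E)\<^sup>*\<^sup>* (R - clus E R S1, insert (clus E R S1) Vc, Ec \<union> nedges E R S1) ({}, a, b)"
      using first_step[OF less.prems(2) False] by blast
    obtain S2 where S2: "min_self_contained (F \<inter> R) (E \<inter> (R \<times> R)) S2" and
      r2: "(alg1_step F E)\<^sup>*\<^sup>* (R - clus E R S2, insert (clus E R S2) Vc, Ec \<union> nedges E R S2) ({}, a', b')"
      using first_step[OF less.prems(3) False] by blast
    define C1 where "C1 = clus E R S1"
    define C2 where "C2 = clus E R S2"
    define N1 where "N1 = nedges E R S1"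
    define N2 where "N2 = nedges E R S2"
    have I1: "inv (R - C1)" using inv_step[OF less.prems(1) S1] C1_def by simp
    have I2: "inv (R - C2)" using inv_step[OF less.prems(1) S2] C2_def by simp
    have c1: "card (R - C1) < card R" using step_card[OF less.prems(1) S1] C1_def by simp
    have c2: "card (R - C2) < card R" using step_card[OF less.prems(1) S2] C2_def by simp
    show ?thesis
    proof (cases "S1 = S2")
      case True
      then show ?thesis using less.hyps[OF c1 I1] r1 r2 C1_def C2_def N1_def N2_def by simp
    next
      case False
      note cm1 = commute[OF less.prems(1) S1 S2 False]
      note cm2 = commute[OF less.prems(1) S2 S1 False[symmetric]]
      define z where "z = (R - C1 - C2, insert C2 (insert C1 Vc), Ec \<union> N1 \<union> N2)"
      have R1ne: "R - C1 \<noteq> {}" using msc_D(1,2)[OF cm1(1)] C1_def by blast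
      have R2ne: "R - C2 \<noteq> {}" using msc_D(1,2)[OF cm2(1)] C2_def by blast
      have st1: "alg1_step F E (R - C1, insert C1 Vc, Ec \<union> N1) z"
        unfolding step_iff z_def using R1ne cm1 C1_def C2_def N2_def by blast
      have z2: "z = (R - C2 - C1, insert C1 (insert C2 Vc), Ec \<union> N2 \<union> N1)"
        unfolding z_def by (auto simp: insert_commute)
      have st2: "alg1_step F E (R - C2, insert C2 Vc, Ec \<union> N2) z"
        unfolding step_iff z2 using R2ne cm2 C1_def C2_def N1_def by blast
      have m: "min_self_contained (F \<inter> (R - C1)) (E \<inter> ((R - C1) \<times> (R - C1))) S2"
        using cm1(1) C1_def by simp
      have Iz: "inv (R - C1 - C2)" using inv_step[OF I1 m] cm1(2) C1_def C2_def by simp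
      obtain c d where zt: "(alg1_step F E)\<^sup>*\<^sup>* z ({}, c, d)"
        using exists_term[OF Iz] unfolding z_def by blast
      have "a = c \<and> b = d"
        using less.hyps[OF c1 I1] r1 converse_rtranclp_into_rtranclp[OF st1 zt] C1_def N1_def by blast
      moreover have "a' = c \<and> b' = d"
        using less.hyps[OF c2 I2] r2 converse_rtranclp_into_rtranclp[OF st2 zt] C2_def N2_def by blast
      ultimately show ?thesis by simp
    qed
  qed
qed

definition good :: "'a set \<Rightarrow> 'a alg1_state \<Rightarrow> bool" where
  "good R0 st \<longleftrightarrow> (case st of (R, Vc, Ec) \<Rightarrow> inv R \<and> R \<subseteq> R0 \<and> partition_on (R0 - R) Vc)"

lemma reach_good:
  assumes "(alg1_step F E)\<^sup>*\<^sup>* (R0, {}, {}) st" "inv R0"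
  shows "good R0 st"
  using assms(1)
proof (induction rule: rtranclp_induct)
  case base
  then show ?case using assms(2) by (simp add: good_def partition_on_empty)
next
  case (step y z)
  obtain R Vc Ec where y: "y = (R, Vc, Ec)" by (cases y) auto
  have g: "inv R" "R \<subseteq> R0" "partition_on (R0 - R) Vc" using step.IH y good_def by auto
  obtain S where S: "min_self_contained (F \<inter> R) (E \<inter> (R \<times> R)) S"
    and z: "z = (R - clus E R S, insert (clus E R S) Vc, Ec \<union> nedges E R S)"
    using step.hyps(2) y step_iff by blast
  let ?C = "clus E R S"
  note cs = clus_sub[OF S]
  have "disjnt ?C (\<Union>Vc)" using partition_onD1[OF g(3)] cs(1) by (auto simp: disjnt_def)
  moreover have "R0 - (R - ?C) - ?C = R0 - R" using cs(1) g(2) by blast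
  moreover have "?C \<subseteq> R0 - (R - ?C)" using cs(1) g(2) by blast
  ultimately have "partition_on (R0 - (R - ?C)) (insert ?C Vc)"
    using partition_on_insert g(3) cs(3) by metis
  moreover have "inv (R - ?C)" using inv_step[OF g(1) S] .
  ultimately show ?case unfolding good_def z using g(2) by auto
qed

lemma alg1_main:
  assumes I: "inv (V \<union> F)"
  shows "alg1_well_defined V F E {}" "\<exists>out. alg1_output V F E {} out"
    "\<And>o1 o2. alg1_output V F E {} o1 \<Longrightarrow> alg1_output V F E {} o2 \<Longrightarrow> o1 = o2"
    "\<And>out. alg1_output V F E {} out \<Longrightarrow> partition_on (V \<union> F) (fst out)"
proof -
  have init: "alg1_init V F {} = (V \<union> F, {}, {})" by (simp add: alg1_init_def)
  have reach: "alg1_reachable V F E {} st \<longleftrightarrow> (alg1_step F E)\<^sup>*\<^sup>* (V \<union> F, {}, {}) st" for st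
    by (simp add: alg1_reachable_def init)
  have EE: "E \<inter> (((V - {}) \<union> F) \<times> ((V - {}) \<union> F)) = E \<inter> ((V \<union> F) \<times> (V \<union> F))" by simp
  have cF: "card F = card V" using I unfolding inv_def by (simp add: Int_absorb2)
  have sc: "self_contained_set (E \<inter> ((V \<union> F) \<times> (V \<union> F))) F"
    using inv_sc[OF I] by (simp add: Int_absorb2)
  show "alg1_well_defined V F E {}"
    unfolding alg1_well_defined_def self_contained_graph_def
  proof (intro conjI allI impI)
    show "card F = card (V - {})" using cF by simp
    show "self_contained_set (E \<inter> ((V - {} \<union> F) \<times> (V - {} \<union> F))) F" using sc by simp
    fix R Vc Ec assume h: "alg1_reachable V F E {} (R, Vc, Ec) \<and> R \<noteq> {}"
    then have "good (V \<union> F) (R, Vc, Ec)" using reach_good[OF _ I] reach by blast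
    then have "inv R" unfolding good_def by simp
    then obtain S where S: "min_self_contained (F \<inter> R) (E \<inter> (R \<times> R)) S" using progress h by blast
    show "\<exists>st'. alg1_step F E (R, Vc, Ec) st'" using step_iff S h by blast
  qed
  show "\<exists>out. alg1_output V F E {} out"
    using exists_term[OF I, of "{}" "{}"] unfolding alg1_output_def reach by blast
  show "o1 = o2" if "alg1_output V F E {} o1" "alg1_output V F E {} o2" for o1 o2
    using that unique_term[OF I] unfolding alg1_output_def reach by blast
  show "partition_on (V \<union> F) (fst out)" if o: "alg1_output V F E {} out" for out
  proof -
    obtain Vc Ec where "(alg1_step F E)\<^sup>*\<^sup>* (V \<union> F, {}, {}) ({}, Vc, Ec)" "out = (Vc, Ec)"
      using o unfolding alg1_output_def reach by blast
    then show ?thesis using reach_good[OF _ I, of "({}, Vc, Ec)"] unfolding good_def by simp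
  qed
qed

end
lemma partition_components: "partition_on S (components S R)"
proof -
  define Q where "Q = (R \<union> R\<inverse>) \<inter> (S \<times> S)"
  define r where "r = {(x, y). x \<in> S \<and> y \<in> S \<and> (x, y) \<in> Q\<^sup>*}"
  have symQ: "sym Q" unfolding Q_def sym_def by auto
  have symQ': "sym (Q\<^sup>*)" using sym_rtrancl[OF symQ] .
  have "equiv S r"
  proof (rule equivI)
    show "refl_on S r" unfolding refl_on_def r_def by auto
    show "r \<subseteq> S \<times> S" unfolding r_def by auto
    show "sym r" unfolding sym_def r_def using symQ' unfolding sym_def by blast
    show "trans r" unfolding trans_def r_def using rtrancl_trans by fast
  qed
  moreover have "components S R = S // r"
  proof -
    have "r `` {x} = {y \<in> S. (x, y) \<in> Q\<^sup>*}" if "x \<in> S" for x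
      using that unfolding r_def by auto
    then show ?thesis unfolding components_def quotient_def Q_def by auto
  qed
  ultimately show ?thesis using partition_on_quotient by metis
qed

lemma partition_on_Un2:
  assumes "partition_on A P" "partition_on B Q" "A \<inter> B = {}"
  shows "partition_on (A \<union> B) (P \<union> Q)"
proof -
  have "\<Union>P \<inter> \<Union>Q = {}" using assms partition_onD1 by metis
  then have "disjoint (P \<union> Q)" using disjoint_union partition_onD2 assms(1,2) by metis
  then show ?thesis using assms unfolding partition_on_def by auto
qed
lemma E'_sub:
  assumes bip: "bipartite V F E"
  shows "alg3_E' V F E W \<subseteq> (V - W) \<times> F"
  using bip unfolding bipartite_def alg3_E'_def by auto

lemma bm_inst:
  assumes fV: "finite V" and fF: "finite F" and bip: "bipartite V F E"
    and ME: "M \<subseteq> alg3_E' V F E W" and mat: "matching M"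
  shows "bm (V - W) F (alg3_E' V F E W) M" "bm F (V - W) ((alg3_E' V F E W)\<inverse>) (M\<inverse>)"
proof -
  have d: "(V - W) \<inter> F = {}" using bip unfolding bipartite_def by auto
  show "bm (V - W) F (alg3_E' V F E W) M"
    by (unfold_locales) (use fV fF d E'_sub[OF bip] ME mat in auto)
  show "bm F (V - W) ((alg3_E' V F E W)\<inverse>) (M\<inverse>)"
    by (unfold_locales) (use fV fF d E'_sub[OF bip] ME mat in \<open>auto simp: matching_conv\<close>)
qed

lemma TI_eq: "alg3_TI V F E W M = alt_reach (alg3_E' V F E W) M (unmatched (V - W) M)"
  by (simp add: alg3_TI_def coarse_I_def)

lemma TO_eq: "alg3_TO V F E W M = alt_reach (alg3_E' V F E W) M (unmatched F M)"
  by (simp add: alg3_TO_def coarse_O_def)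

lemma TO_eq2: "alg3_TO V F E W M = alt_reach ((alg3_E' V F E W)\<inverse>) (M\<inverse>) (unmatched F (M\<inverse>))"
  by (simp add: alg3_TO_def coarse_O_def alt_reach_conv unmatched_conv)

lemma TC_eq: "alg3_TC V F E W M = ((V - W) \<union> F) - alg3_TI V F E W M - alg3_TO V F E W M"
  by (simp add: alg3_TC_def coarse_C_def alg3_TI_def alg3_TO_def)

lemma indep:
  assumes fV: "finite V" and fF: "finite F" and bip: "bipartite V F E"
    and m1: "max_matching (alg3_E' V F E W) M1" and m2: "max_matching (alg3_E' V F E W) M2"
  shows "alg3_TI V F E W M1 = alg3_TI V F E W M2" "alg3_TO V F E W M1 = alg3_TO V F E W M2"
    "alg3_TC V F E W M1 = alg3_TC V F E W M2"
proof -
  have M1: "M1 \<subseteq> alg3_E' V F E W" "matching M1" and M2: "M2 \<subseteq> alg3_E' V F E W" "matching M2"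
    using m1 m2 unfolding max_matching_def by auto
  note b1 = bm_inst[OF fV fF bip M1] and b2 = bm_inst[OF fV fF bip M2]
  show t1: "alg3_TI V F E W M1 = alg3_TI V F E W M2"
    unfolding TI_eq using TI_indep[OF b1(1) b2(1) m1 m2] .
  have m1': "max_matching ((alg3_E' V F E W)\<inverse>) (M1\<inverse>)" using m1 max_matching_conv by blast
  have m2': "max_matching ((alg3_E' V F E W)\<inverse>) (M2\<inverse>)" using m2 max_matching_conv by blast
  show t2: "alg3_TO V F E W M1 = alg3_TO V F E W M2"
    unfolding TO_eq2 using TI_indep[OF b1(2) b2(2) m1' m2'] .
  show "alg3_TC V F E W M1 = alg3_TC V F E W M2" unfolding TC_eq t1 t2 ..
qed

lemma max_exists:
  assumes fV: "finite V" and fF: "finite F" and bip: "bipartite V F E"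
  shows "\<exists>M. max_matching (alg3_E' V F E W) M"
proof -
  let ?E = "alg3_E' V F E W"
  have fE: "finite ?E" using E'_sub[OF bip] fV fF finite_subset by (metis finite_Diff finite_SigmaI)
  define P where "P M \<longleftrightarrow> M \<subseteq> ?E \<and> matching M" for M
  have "P {}" unfolding P_def matching_def by simp
  then obtain M where M: "P M" "\<And>M'. P M' \<Longrightarrow> card ?E - card M \<le> card ?E - card M'"
    using ex_has_least_nat[of P "{}" "\<lambda>M. card ?E - card M"] by blast
  have "card M' \<le> card M" if "M' \<subseteq> ?E" "matching M'" for M'
  proof -
    have "card M' \<le> card ?E" using card_mono[OF fE that(1)] .
    moreover have "card M \<le> card ?E" using card_mono[OF fE] M(1) P_def by blast
    moreover have "card ?E - card M \<le> card ?E - card M'" using M(2) that P_def by blast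
    ultimately show ?thesis by linarith
  qed
  then show ?thesis using M(1) unfolding P_def max_matching_def by blast
qed
lemma per_M:
  assumes fV: "finite V" and fF: "finite F" and bip: "bipartite V F E"
    and max: "max_matching (alg3_E' V F E W) M"
  defines "TI \<equiv> alg3_TI V F E W M" and "TO \<equiv> alg3_TO V F E W M" and "TC \<equiv> alg3_TC V F E W M"
  shows "TI \<inter> TO = {}" "TI \<subseteq> (V - W) \<union> F" "TO \<subseteq> (V - W) \<union> F" "TC = ((V - W) \<union> F) - TI - TO"
    "a1 (V \<inter> TC) (F \<inter> TC) (E \<inter> (TC \<times> TC))"
    "a1.inv (V \<inter> TC) (F \<inter> TC) (E \<inter> (TC \<times> TC)) ((V \<inter> TC) \<union> (F \<inter> TC))"
proof -
  let ?E = "alg3_E' V F E W" and ?V = "V - W"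
  have Ms: "M \<subseteq> ?E" "matching M" using max unfolding max_matching_def by auto
  interpret I: bm ?V F ?E M using bm_inst(1)[OF fV fF bip Ms] .
  interpret O: bm F ?V "?E\<inverse>" "M\<inverse>" using bm_inst(2)[OF fV fF bip Ms] .
  have dVF: "V \<inter> F = {}" and EVF: "E \<subseteq> V \<times> F" using bip unfolding bipartite_def by auto
  have TIe: "TI = I.TI" unfolding TI_def TI_eq ..
  have TOe: "TO = I.TIB" unfolding TO_def TO_eq ..
  have TOe2: "TO = O.TI" unfolding TO_def TO_eq2 ..
  show disj: "TI \<inter> TO = {}" using I.TI_TIB[OF max] TIe TOe by simp
  show sI: "TI \<subseteq> ?V \<union> F" using I.TI_sub TIe by simp
  show sO: "TO \<subseteq> ?V \<union> F" using I.TIB_sub TOe by simp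
  show TCe: "TC = (?V \<union> F) - TI - TO" unfolding TC_def TC_eq TI_def TO_def ..
  have ME: "M \<subseteq> E" using Ms(1) unfolding alg3_E'_def by auto
  have fm: "\<exists>v. (v, f) \<in> M \<and> v \<in> V \<inter> TC" if f: "f \<in> F \<inter> TC" for f
  proof -
    have "f \<notin> unmatched F M"
    proof
      assume "f \<in> unmatched F M"
      then have "f \<in> TO" using I.unm_reach[of F] TOe by blast
      then show False using f TCe by blast
    qed
    then obtain y where "(f, y) \<in> M \<or> (y, f) \<in> M" using f unfolding unmatched_def by auto
    moreover have "(f, y) \<notin> M" using Ms(1) E'_sub[OF bip] f dVF by auto
    ultimately have vf: "(y, f) \<in> M" by simp
    have yV: "y \<in> ?V" using vf Ms(1) E'_sub[OF bip] by auto
    have "y \<notin> TI"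
    proof
      assume "y \<in> TI"
      then have "f \<in> TI" using I.closeA[of y f] vf yV Ms(1) TIe by auto
      then show False using f TCe by blast
    qed
    moreover have "y \<notin> TO"
    proof
      assume "y \<in> TO"
      then have "f \<in> TO" using O.closeB[of y f] vf yV TOe2 by auto
      then show False using f TCe by blast
    qed
    ultimately have "y \<in> TC" using yV TCe by blast
    then show ?thesis using vf yV by blast
  qed
  have vm: "\<exists>f. (v, f) \<in> M \<and> f \<in> F \<inter> TC" if v: "v \<in> V \<inter> TC" for v
  proof -
    have vV: "v \<in> ?V" using v TCe dVF by blast
    have "v \<notin> unmatched ?V M"
    proof
      assume "v \<in> unmatched ?V M"
      then have "v \<in> TI" using I.unm_reach[of ?V] TIe by blast
      then show False using v TCe by blast
    qed
    then obtain y where "(v, y) \<in> M \<or> (y, v) \<in> M" using vV unfolding unmatched_def by auto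
    moreover have "(y, v) \<notin> M" using Ms(1) E'_sub[OF bip] vV dVF by auto
    ultimately have vf: "(v, y) \<in> M" by simp
    have yF: "y \<in> F" using vf Ms(1) E'_sub[OF bip] by auto
    have "y \<notin> TI"
    proof
      assume "y \<in> TI"
      then have "v \<in> TI" using I.closeB[of y v] vf yF TIe by auto
      then show False using v TCe by blast
    qed
    moreover have "y \<notin> TO"
    proof
      assume "y \<in> TO"
      then have "v \<in> TO" using O.closeA[of y v] vf yF TOe2 Ms(1) by auto
      then show False using v TCe by blast
    qed
    ultimately have "y \<in> TC" using yF TCe by blast
    then show ?thesis using vf yF by blast
  qed
  define g where "g f = (SOME v. (v, f) \<in> M \<and> v \<in> V \<inter> TC)" for f
  define h where "h v = (SOME f. (v, f) \<in> M \<and> f \<in> F \<inter> TC)" for v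
  have g: "(g f, f) \<in> M \<and> g f \<in> V \<inter> TC" if "f \<in> F \<inter> TC" for f
    using someI_ex[OF fm[OF that]] unfolding g_def .
  have h: "(v, h v) \<in> M \<and> h v \<in> F \<inter> TC" if "v \<in> V \<inter> TC" for v
    using someI_ex[OF vm[OF that]] unfolding h_def .
  have injg: "inj_on g G" if "G \<subseteq> F \<inter> TC" for G
  proof (rule inj_onI)
    fix x y assume "x \<in> G" "y \<in> G" "g x = g y"
    then show "x = y" using g[of x] g[of y] that I.M_fst by (metis subsetD)
  qed
  have injh: "inj_on h (V \<inter> TC)"
  proof (rule inj_onI)
    fix x y assume "x \<in> V \<inter> TC" "y \<in> V \<inter> TC" "h x = h y"
    then show "x = y" using h[of x] h[of y] I.M_snd by metis
  qed
  have fVT: "finite (V \<inter> TC)" and fFT: "finite (F \<inter> TC)" using fV fF by auto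
  have c1: "card (F \<inter> TC) \<le> card (V \<inter> TC)"
    using card_inj_on_le[OF injg[of "F \<inter> TC"] _ fVT] g by blast
  have c2: "card (V \<inter> TC) \<le> card (F \<inter> TC)"
    using card_inj_on_le[OF injh _ fFT] h by blast
  show a: "a1 (V \<inter> TC) (F \<inter> TC) (E \<inter> (TC \<times> TC))"
    by unfold_locales (use fV fF dVF EVF in auto)
  let ?R = "(V \<inter> TC) \<union> (F \<inter> TC)"
  have hall: "card G \<le> card (adj (E \<inter> (TC \<times> TC) \<inter> (?R \<times> ?R)) G)" if G: "G \<subseteq> F \<inter> TC" for G
  proof -
    have "g ` G \<subseteq> adj (E \<inter> (TC \<times> TC) \<inter> (?R \<times> ?R)) G"
    proof
      fix y assume "y \<in> g ` G"
      then obtain f where f: "f \<in> G" "y = g f" by blast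
      then have "(y, f) \<in> E \<inter> (TC \<times> TC) \<inter> (?R \<times> ?R)" using g[of f] G ME by auto
      then show "y \<in> adj (E \<inter> (TC \<times> TC) \<inter> (?R \<times> ?R)) G" using f(1) unfolding adj_def by blast
    qed
    moreover have "finite (adj (E \<inter> (TC \<times> TC) \<inter> (?R \<times> ?R)) G)"
    proof (rule finite_subset)
      show "adj (E \<inter> (TC \<times> TC) \<inter> (?R \<times> ?R)) G \<subseteq> ?R" unfolding adj_def by auto
      show "finite ?R" using fVT fFT by simp
    qed
    ultimately show ?thesis using card_inj_on_le[OF injg[OF G]] by blast
  qed
  have e1: "F \<inter> TC \<inter> ?R = F \<inter> TC" and e2: "V \<inter> TC \<inter> ?R = V \<inter> TC" by auto
  show "a1.inv (V \<inter> TC) (F \<inter> TC) (E \<inter> (TC \<times> TC)) ?R"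
    unfolding a1.inv_def[OF a] e1 e2 using c1 c2 hall by auto
qed
definition out_of where
  "out_of V F E W TI TO TC VC EC =
    (let Vs = components TI (E \<inter> (TI \<times> TI)) \<union> VC \<union> components TO (E \<inter> (TO \<times> TO))
                 \<union> (\<lambda>w. {w}) ` W
        in (Vs,
             EC
             \<union> {(v, cl Vs f) | v f. (v, f) \<in> E \<and> v \<in> (TO \<union> TC) \<inter> V \<and> f \<in> TI \<inter> F}
             \<union> {(v, cl Vs f) | v f. (v, f) \<in> E \<and> \<not> (v \<in> (TO \<union> TC) \<inter> V \<and> f \<in> TI \<inter> F)
                                   \<and> v \<in> TO \<inter> V \<and> f \<in> TC \<inter> F}
             \<union> {(w, cl Vs f) | w f. w \<in> W \<and> f \<in> adj E {w}}))"

lemma for_iff: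
  "alg3_output_for V F E W M out \<longleftrightarrow>
    (\<exists>VC EC. alg1_output (V \<inter> alg3_TC V F E W M) (F \<inter> alg3_TC V F E W M)
        (E \<inter> (alg3_TC V F E W M \<times> alg3_TC V F E W M)) {} (VC, EC) \<and>
      out = out_of V F E W (alg3_TI V F E W M) (alg3_TO V F E W M) (alg3_TC V F E W M) VC EC)"
  unfolding alg3_output_for_def out_of_def Let_def ..

lemma fst_out_of:
  "fst (out_of V F E W TI TO TC VC EC) =
     components TI (E \<inter> (TI \<times> TI)) \<union> VC \<union> components TO (E \<inter> (TO \<times> TO)) \<union> (\<lambda>w. {w}) ` W"
  unfolding out_of_def Let_def by simp

theorem corollary11:
  fixes V F W :: "'a set" and E :: "('a \<times> 'a) set"
  assumes "finite V" and "finite F" and "bipartite V F E" and "W \<subseteq> V"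
  shows "alg3_well_defined V F E W \<and> (\<exists>!out. alg3_output V F E W out)"
proof -
  note fV = assms(1) and fF = assms(2) and bip = assms(3) and WV = assms(4)
  have dVF: "V \<inter> F = {}" using bip unfolding bipartite_def by auto
  have alg1M: "alg1_well_defined (V \<inter> alg3_TC V F E W M) (F \<inter> alg3_TC V F E W M)
        (E \<inter> (alg3_TC V F E W M \<times> alg3_TC V F E W M)) {}"
    "\<exists>out. alg1_output (V \<inter> alg3_TC V F E W M) (F \<inter> alg3_TC V F E W M)
        (E \<inter> (alg3_TC V F E W M \<times> alg3_TC V F E W M)) {} out"
    "\<And>o1 o2. alg1_output (V \<inter> alg3_TC V F E W M) (F \<inter> alg3_TC V F E W M)
        (E \<inter> (alg3_TC V F E W M \<times> alg3_TC V F E W M)) {} o1 \<Longrightarrow>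
      alg1_output (V \<inter> alg3_TC V F E W M) (F \<inter> alg3_TC V F E W M)
        (E \<inter> (alg3_TC V F E W M \<times> alg3_TC V F E W M)) {} o2 \<Longrightarrow> o1 = o2"
    "\<And>out. alg1_output (V \<inter> alg3_TC V F E W M) (F \<inter> alg3_TC V F E W M)
        (E \<inter> (alg3_TC V F E W M \<times> alg3_TC V F E W M)) {} out \<Longrightarrow>
      partition_on ((V \<inter> alg3_TC V F E W M) \<union> (F \<inter> alg3_TC V F E W M)) (fst out)"
    if max: "max_matching (alg3_E' V F E W) M" for M
  proof -
    note pm = per_M[OF fV fF bip max]
    interpret A: a1 "V \<inter> alg3_TC V F E W M" "F \<inter> alg3_TC V F E W M"
        "E \<inter> (alg3_TC V F E W M \<times> alg3_TC V F E W M)" using pm(5) .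
    note am = A.alg1_main[OF pm(6)]
    show "alg1_well_defined (V \<inter> alg3_TC V F E W M) (F \<inter> alg3_TC V F E W M)
        (E \<inter> (alg3_TC V F E W M \<times> alg3_TC V F E W M)) {}" using am(1) .
    show "\<exists>out. alg1_output (V \<inter> alg3_TC V F E W M) (F \<inter> alg3_TC V F E W M)
        (E \<inter> (alg3_TC V F E W M \<times> alg3_TC V F E W M)) {} out" using am(2) .
    show "o1 = o2" if "alg1_output (V \<inter> alg3_TC V F E W M) (F \<inter> alg3_TC V F E W M)
        (E \<inter> (alg3_TC V F E W M \<times> alg3_TC V F E W M)) {} o1"
      "alg1_output (V \<inter> alg3_TC V F E W M) (F \<inter> alg3_TC V F E W M)
        (E \<inter> (alg3_TC V F E W M \<times> alg3_TC V F E W M)) {} o2" for o1 o2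
      using am(3)[OF that] .
    show "partition_on ((V \<inter> alg3_TC V F E W M) \<union> (F \<inter> alg3_TC V F E W M)) (fst out)"
      if "alg1_output (V \<inter> alg3_TC V F E W M) (F \<inter> alg3_TC V F E W M)
        (E \<inter> (alg3_TC V F E W M \<times> alg3_TC V F E W M)) {} out" for out
      using am(4)[OF that] .
  qed
  have part: "partition_on (V \<union> F) (fst out)"
    if max: "max_matching (alg3_E' V F E W) M" and o: "alg3_output_for V F E W M out" for M out
  proof -
    define TI where "TI = alg3_TI V F E W M"
    define TO where "TO = alg3_TO V F E W M"
    define TC where "TC = alg3_TC V F E W M"
    note pm = per_M[OF fV fF bip max, folded TI_def TO_def TC_def]
    obtain VC EC where VC: "alg1_output (V \<inter> TC) (F \<inter> TC) (E \<inter> (TC \<times> TC)) {} (VC, EC)"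
      and oe: "out = out_of V F E W TI TO TC VC EC"
      using o unfolding for_iff TI_def TO_def TC_def by blast
    have TCsub: "TC \<subseteq> V \<union> F" using pm(4) by blast
    have "(V \<inter> TC) \<union> (F \<inter> TC) = TC" using TCsub by blast
    then have pC: "partition_on TC VC" using alg1M(4)[OF max, folded TC_def, OF VC] by simp
    have d1: "TI \<inter> TC = {}" using pm(4) by blast
    have d2: "(TI \<union> TC) \<inter> TO = {}" using pm(1,4) by blast
    have d3: "(TI \<union> TC \<union> TO) \<inter> W = {}" using pm(2,3,4) WV dVF by blast
    have p1: "partition_on (TI \<union> TC) (components TI (E \<inter> (TI \<times> TI)) \<union> VC)"
      using partition_on_Un2[OF partition_components pC d1] .
    have p2: "partition_on (TI \<union> TC \<union> TO) (components TI (E \<inter> (TI \<times> TI)) \<union> VC \<union> components TO (E \<inter> (TO \<times> TO)))"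
      using partition_on_Un2[OF p1 partition_components d2] .
    have p3: "partition_on (TI \<union> TC \<union> TO \<union> W) (fst out)"
      unfolding oe fst_out_of
      using partition_on_Un2[OF p2 partition_on_singletons d3] .
    moreover have "TI \<union> TC \<union> TO \<union> W = V \<union> F" using pm(2,3,4) WV by blast
    ultimately show ?thesis by simp
  qed
  obtain M0 where M0: "max_matching (alg3_E' V F E W) M0" using max_exists[OF fV fF bip] by blast
  have wd: "alg3_well_defined V F E W"
    unfolding alg3_well_defined_def Let_def
  proof (intro conjI allI impI)
    show "\<exists>M. max_matching (alg3_E' V F E W) M" using M0 by blast
    fix M assume m: "max_matching (alg3_E' V F E W) M"
    show "alg1_well_defined (V \<inter> alg3_TC V F E W M) (F \<inter> alg3_TC V F E W M)
        (E \<inter> (alg3_TC V F E W M \<times> alg3_TC V F E W M)) {}" using alg1M(1)[OF m] .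
    fix out assume "alg3_output_for V F E W M out"
    then show "partition_on (V \<union> F) (fst out)" using part[OF m] by blast
  qed
  obtain out0 where out0: "alg1_output (V \<inter> alg3_TC V F E W M0) (F \<inter> alg3_TC V F E W M0)
        (E \<inter> (alg3_TC V F E W M0 \<times> alg3_TC V F E W M0)) {} out0"
    using alg1M(2)[OF M0] by blast
  obtain VC0 EC0 where "out0 = (VC0, EC0)" by (cases out0)
  then have ex: "alg3_output V F E W (out_of V F E W (alg3_TI V F E W M0) (alg3_TO V F E W M0)
        (alg3_TC V F E W M0) VC0 EC0)"
    unfolding alg3_output_def for_iff using M0 out0 by blast
  have un: "o1 = o2" if h1: "alg3_output V F E W o1" and h2: "alg3_output V F E W o2" for o1 o2
  proof -
    obtain M1 VC1 EC1 where m1: "max_matching (alg3_E' V F E W) M1"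
      and a1: "alg1_output (V \<inter> alg3_TC V F E W M1) (F \<inter> alg3_TC V F E W M1)
        (E \<inter> (alg3_TC V F E W M1 \<times> alg3_TC V F E W M1)) {} (VC1, EC1)"
      and e1: "o1 = out_of V F E W (alg3_TI V F E W M1) (alg3_TO V F E W M1) (alg3_TC V F E W M1) VC1 EC1"
      using h1 unfolding alg3_output_def for_iff by blast
    obtain M2 VC2 EC2 where m2: "max_matching (alg3_E' V F E W) M2"
      and a2: "alg1_output (V \<inter> alg3_TC V F E W M2) (F \<inter> alg3_TC V F E W M2)
        (E \<inter> (alg3_TC V F E W M2 \<times> alg3_TC V F E W M2)) {} (VC2, EC2)"
      and e2: "o2 = out_of V F E W (alg3_TI V F E W M2) (alg3_TO V F E W M2) (alg3_TC V F E W M2) VC2 EC2"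
      using h2 unfolding alg3_output_def for_iff by blast
    note ind = indep[OF fV fF bip m1 m2]
    have "(VC1, EC1) = (VC2, EC2)" using alg1M(3)[OF m1 a1] a2 ind(3) by simp
    then show ?thesis using e1 e2 ind by simp
  qed
  show ?thesis using wd ex un by blast
qed

end
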